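(* Let $\sigma,\tau,\bar\sigma,\bar\tau$ satisfy the Standing Hypothesis and let $M\ge1$, $a\ge2$, $k\ge1$ be integers. Then $$\begin{aligned} &\{\sigma,ka,ka,a^{M},\tau\,|\,\bar\sigma,(k-1)a+1,1^{M},\bar\tau\}-\{\sigma,ka+1,ka-1,a^{M},\tau\,|\,\bar\sigma,(k-1)a+1,1^{M},\bar\tau\}\\ &\quad+\sum_{i=1}^{M}\Big(\{\sigma,a+1,a^{i-1},ka-1,ka,a^{M-i},\tau\,|\,\bar\sigma,1^{i},(k-1)a+1,1^{M-i},\bar\tau\}\\ &\qquad\qquad-\{\sigma,a+1,a^{i-1},ka,ka-1,a^{M-i},\tau\,|\,\bar\sigma,1^{i},(k-1)a+1,1^{M-i},\bar\tau\}\Big)\\ &=\{\sigma,ka,ka,a^{M},\tau\,|\,\bar\sigma,ka,1^{M},\bar\tau\} +\{\sigma,ka+1,(k+1)a-1,a^{M-1},\tau\,|\,\bar\sigma,ka,1^{M-1},\bar\tau\}\\ &\quad-\{\sigma,(k+1)a,ka,a^{M-1},\tau\,|\,\bar\sigma,ka,1^{M-1},\bar\tau\} +\{\sigma,a+1,a^{M-1},ka,ka-1+\tau_1,\tau\backslash\tau_1\,|\,\bar\sigma,1^{M},ka,\bar\tau\backslash\bar\tau_1\}\\ &\quad+\sum_{i=1}^{M-1}\Big(\{\sigma,a+1,a^{i-1},ka,(k+1)a-1,a^{M-1-i},\tau\,|\,\bar\sigma,1^{i},ka,1^{M-i-1},\bar\tau\}\\ &\qquad\qquad-\{\sigma,a+1,a^{i-1},(k+1)a-1,ka,a^{M-1-i},\tau\,|\,\bar\sigma,1^{i},ka,1^{M-i-1},\bar\tau\}\Big),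 \end{aligned}$$ where the fourth term on the right (the one containing $\tau\backslash\tau_1$) is omitted if $t=0$.
   Context: Overlap notation: for $\alpha=(\alpha_1,\dots,\alpha_L)$ with $\alpha_i\ge1$ and $\beta=(\beta_1,\dots,\beta_{L-1})$ with $0\le\beta_i\le\min\{\alpha_i,\alpha_{i+1}\}$, $(\alpha\,|\,\beta)$ is the skew diagram $\lambda/\mu$ (boxes $(i,j)$ with $\mu_i<j\le\lambda_i$, identified up to deleting empty rows/columns) with $L$ nonempty rows, $\lambda_i-\mu_i=\alpha_i$, $\lambda_{i+1}-\mu_i=\beta_i$ (row $i$ has $\alpha_i$ boxes, rows $i,i+1$ share $\beta_i$ columns); $\{\alpha\,|\,\beta\}=s_{\lambda/\mu}$ is its skew Schur function (generating function of semistandard Young tableaux of that shape). Commas denote concatenation of sequences; $a^j$ denotes $j$ copies of $a$ (empty if $j=0$). Standing Hypothesis: $\sigma=(\sigma_1,\dots,\sigma_s)$, $\tau=(\tau_1,\dots,\tau_t)$ compositions, $s,t\ge0$; $\bar\sigma,\bar\tau$ sequences of non-negative integers of lengths $s,t$; $\bar\sigma_s=1$ if $s>0$; $\bar\tau_1=1$ if $t>0$; $\bar\sigma_i\le\min\{\sigma_i,\sigma_{i+1}\}$ ($1\le i<s$), $\bar\tau_i\le\min\{\tau_i,\tau_{i-1}\}$ ($1<i\le t$). $\tau\backslash\tau_1$ removes the first part of $\tau$ and $\bar\tau\backslash\bar\tau_1$ the first entry of $\bar\tau$. *)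

theory Defs
  imports "HOL-Library.FuncSet"
begin

text \<open>Rows are indexed 0..L-1 (top to bottom, English
convention), columns are integers.  Row i occupies the columns mu_i <= j < lambda_i, where
lambda_i - mu_i = alpha_i and lambda_(i+1) - mu_i = beta_i; the last row is normalised by
mu_(L-1) = 0.\<close>

definition ov_mu :: "nat list \<Rightarrow> nat list \<Rightarrow> nat \<Rightarrow> int" where
  "ov_mu \<alpha> \<beta> i = (\<Sum>j\<in>{Suc i..<length \<alpha>}. int (\<alpha> ! j)) - (\<Sum>j\<in>{i..<length \<alpha> - 1}. int (\<beta> ! j))"

definition ov_lam :: "nat list \<Rightarrow> nat list \<Rightarrow> nat \<Rightarrow> int" where
  "ov_lam \<alpha> \<beta> i = ov_mu \<alpha> \<beta> i + int (\<alpha> ! i)"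

definition ov_cells :: "nat list \<Rightarrow> nat list \<Rightarrow> (nat \<times> int) set" where
  "ov_cells \<alpha> \<beta> = {(i, j). i < length \<alpha> \<and> ov_mu \<alpha> \<beta> i \<le> j \<and> j < ov_lam \<alpha> \<beta> i}"

definition ssyt :: "nat \<Rightarrow> (nat \<times> int) set \<Rightarrow> ((nat \<times> int) \<Rightarrow> nat) set" where
  "ssyt n D = {T \<in> D \<rightarrow>\<^sub>E {..<n}.
      (\<forall>i j j'. (i, j) \<in> D \<longrightarrow> (i, j') \<in> D \<longrightarrow> j \<le> j' \<longrightarrow> T (i, j) \<le> T (i, j')) \<and>
      (\<forall>i i' j. (i, j) \<in> D \<longrightarrow> (i', j) \<in> D \<longrightarrow> i < i' \<longrightarrow> T (i, j) < T (i', j))}"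

text \<open>{alpha | beta} = s_(lambda/mu) evaluated in the n variables x 0, ..., x (n-1)
(all further variables set to 0).\<close>

definition ov_schur :: "nat \<Rightarrow> (nat \<Rightarrow> 'a::comm_ring_1) \<Rightarrow> nat list \<Rightarrow> nat list \<Rightarrow> 'a" where
  "ov_schur n x \<alpha> \<beta> = (\<Sum>T\<in>ssyt n (ov_cells \<alpha> \<beta>). \<Prod>c\<in>ov_cells \<alpha> \<beta>. x (T c))"

definition standing_hyp :: "nat list \<Rightarrow> nat list \<Rightarrow> nat list \<Rightarrow> nat list \<Rightarrow> bool" where
  "standing_hyp \<sigma> \<tau> \<sigma>b \<tau>b \<longleftrightarrow>
     (\<forall>i<length \<sigma>. 1 \<le> \<sigma> ! i) \<and> (\<forall>i<length \<tau>. 1 \<le> \<tau> ! i) \<and>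
     length \<sigma>b = length \<sigma> \<and> length \<tau>b = length \<tau> \<and>
     (\<sigma> \<noteq> [] \<longrightarrow> last \<sigma>b = 1) \<and> (\<tau> \<noteq> [] \<longrightarrow> hd \<tau>b = 1) \<and>
     (\<forall>i. i + 1 < length \<sigma> \<longrightarrow> \<sigma>b ! i \<le> min (\<sigma> ! i) (\<sigma> ! (i + 1))) \<and>
     (\<forall>i. 1 \<le> i \<and> i < length \<tau> \<longrightarrow> \<tau>b ! i \<le> min (\<tau> ! i) (\<tau> ! (i - 1)))"

end

theory Submission
  imports Defs "HOL-Library.Multiset"
begin

lemma sorted_take: "sorted xs \<Longrightarrow> sorted (take k xs)"
  by (metis append_take_drop_id sorted_append)

lemma sorted_drop: "sorted xs \<Longrightarrow> sorted (drop k xs)"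
  by (metis append_take_drop_id sorted_append)

lemma set_take_nth: "y \<in> set (take k xs) \<Longrightarrow> \<exists>i<min k (length xs). y = xs!i"
  by (auto simp: in_set_conv_nth)

lemma set_drop_nth: "y \<in> set (drop k xs) \<Longrightarrow> \<exists>i. k \<le> i \<and> i < length xs \<and> y = xs!i"
  apply (auto simp: in_set_conv_nth)
  by (metis add.commute le_add2 less_diff_conv)

lemma sw_fwd:
  fixes A B :: "nat list"
  assumes sA: "sorted A" and sB: "sorted B" and lA: "length A = p" and lB: "length B = q"
    and r: "1 \<le> r" "r \<le> p" "r \<le> q" and j: "j < r" "B!(q-r+j) \<le> A!j" "\<forall>i<j. A!i < B!(q-r+i)"
    and C: "C = take (q-r+j+1) B @ drop j A" and D: "D = take j A @ drop (q-r+j+1) B"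
  shows "sorted C" "sorted D" "length C = p+q-r+1" "length D = r-1"
    "mset C + mset D = mset A + mset B"
    "take (q-r+1) C = take (q-r+1) B" "drop q C = drop (r-1) A"
    "(LEAST i. i < r \<and> (i = r-1 \<or> C!(q-r+i) \<le> D!i)) = j"
    "take j D @ drop (q-r+j+1) C = A" "take (q-r+j+1) C @ drop j D = B"
proof -
  have lt: "length (take (q-r+j+1) B) = q-r+j+1" using lB j r by simp
  show "sorted C" unfolding C sorted_append
  proof (intro conjI ballI)
    show "sorted (take (q - r + j + 1) B)" using sB by (rule sorted_take)
    show "sorted (drop j A)" using sA by (rule sorted_drop)
    fix y z assume y: "y \<in> set (take (q-r+j+1) B)" and z: "z \<in> set (drop j A)"
    obtain i where i: "i < q-r+j+1" "y = B!i" using set_take_nth[OF y] lt by auto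
    obtain i' where i': "j \<le> i'" "i' < length A" "z = A!i'" using set_drop_nth[OF z] by auto
    have "y \<le> B!(q-r+j)" using i sorted_nth_mono[OF sB, of i "q-r+j"] lB j r by auto
    also have "\<dots> \<le> A!j" by (rule j(2))
    also have "\<dots> \<le> z" using i' sorted_nth_mono[OF sA] by auto
    finally show "y \<le> z" .
  qed
  show "sorted D" unfolding D sorted_append
  proof (intro conjI ballI)
    show "sorted (take j A)" using sA by (rule sorted_take)
    show "sorted (drop (q-r+j+1) B)" using sB by (rule sorted_drop)
    fix y z assume y: "y \<in> set (take j A)" and z: "z \<in> set (drop (q-r+j+1) B)"
    obtain i where i: "i < j" "y = A!i" using set_take_nth[OF y] by auto
    obtain i' where i': "q-r+j+1 \<le> i'" "i' < length B" "z = B!i'" using set_drop_nth[OF z] by auto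
    have "y \<le> A!(j-1)" using i sorted_nth_mono[OF sA, of i "j-1"] lA j r by auto
    also have "\<dots> < B!(q-r+(j-1))" using j(3) i by (metis diff_less less_nat_zero_code not_gr_zero zero_less_one)
    also have "\<dots> \<le> z" using i' sorted_nth_mono[OF sB] i by auto
    finally show "y \<le> z" by simp
  qed
  show "length C" : "length C = p+q-r+1" using C lA lB j r by simp
  show "length D = r-1" using D lA lB j r by simp
  show "mset C + mset D = mset A + mset B"
  proof -
    have "mset C + mset D = (mset (take j A) + mset (drop j A)) + (mset (take (q-r+j+1) B) + mset (drop (q-r+j+1) B))"
      using C D by (simp add: ac_simps)
    also have "\<dots> = mset A + mset B" by (simp flip: mset_append)
    finally show ?thesis .
  qed
  show "take (q-r+1) C = take (q-r+1) B" using C lt by (simp add: take_append)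
  show "drop q C = drop (r-1) A" using C lt j r lB
    by (simp add: drop_append)
  show "take j D @ drop (q-r+j+1) C = A" using C D lt lA j r by simp
  show "take (q-r+j+1) C @ drop j D = B" using C D lt lA j r by simp
  show "(LEAST i. i < r \<and> (i = r-1 \<or> C!(q-r+i) \<le> D!i)) = j"
  proof (rule Least_equality)
    show "j < r \<and> (j = r - 1 \<or> C ! (q - r + j) \<le> D ! j)"
    proof (cases "j = r - 1")
      case False
      have "C!(q-r+j) = B!(q-r+j)" using C lt by (simp add: nth_append)
      also have "\<dots> \<le> B!(q-r+j+1)" using sorted_nth_mono[OF sB] lB j r False by auto
      also have "\<dots> = D!j" using D j r lA lB False by (simp add: nth_append)
      finally show ?thesis using j by simp
    qed (use j in simp)
  next
    fix y assume y: "y < r \<and> (y = r - 1 \<or> C ! (q - r + y) \<le> D ! y)"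
    show "j \<le> y"
    proof (rule ccontr)
      assume "\<not> j \<le> y"
      hence yj: "y < j" by simp
      have "C!(q-r+y) = B!(q-r+y)" using C lt yj by (simp add: nth_append)
      moreover have "D!y = A!y" using D yj lA j r by (simp add: nth_append)
      ultimately show False using y yj j(3) j(1) by auto
    qed
  qed
qed

lemma sw_bwd:
  fixes C D :: "nat list"
  assumes sC: "sorted C" and sD: "sorted D" and lC: "length C = p+q-r+1" and lD: "length D = r-1"
    and r: "1 \<le> r" "r \<le> p" "r \<le> q" and i: "i < r" "i = r-1 \<or> C!(q-r+i) \<le> D!i"
       "\<forall>i'<i. \<not> (C!(q-r+i') \<le> D!i')"
    and A: "A = take i D @ drop (q-r+i+1) C" and B: "B = take (q-r+i+1) C @ drop i D"
  shows "sorted A" "sorted B" "length A = p" "length B = q"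
     "B!(q-r+i) \<le> A!i" "\<forall>i'<i. A!i' < B!(q-r+i')"
     "take (q-r+i+1) B @ drop i A = C" "take i A @ drop (q-r+i+1) B = D"
proof -
  have ltD: "length (take i D) = i" using lD i by simp
  have ltC: "length (take (q-r+i+1) C) = q-r+i+1" using lC i r by simp
  show "sorted A" unfolding A sorted_append
  proof (intro conjI ballI)
    show "sorted (take i D)" using sD by (rule sorted_take)
    show "sorted (drop (q-r+i+1) C)" using sC by (rule sorted_drop)
    fix y z assume y: "y \<in> set (take i D)" and z: "z \<in> set (drop (q-r+i+1) C)"
    obtain t where t: "t < i" "y = D!t" using set_take_nth[OF y] ltD by auto
    obtain t' where t': "q-r+i+1 \<le> t'" "t' < length C" "z = C!t'" using set_drop_nth[OF z] by auto
    have "y \<le> D!(i-1)" using t sorted_nth_mono[OF sD, of t "i-1"] lD i by auto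
    also have "\<dots> < C!(q-r+(i-1))" using i(3) t by (metis diff_less less_nat_zero_code not_gr_zero zero_less_one not_le)
    also have "\<dots> \<le> z" using t' sorted_nth_mono[OF sC] t by auto
    finally show "y \<le> z" by simp
  qed
  show "sorted B" unfolding B sorted_append
  proof (intro conjI ballI)
    show "sorted (take (q-r+i+1) C)" using sC by (rule sorted_take)
    show "sorted (drop i D)" using sD by (rule sorted_drop)
    fix y z assume y: "y \<in> set (take (q-r+i+1) C)" and z: "z \<in> set (drop i D)"
    obtain t where t: "t < q-r+i+1" "y = C!t" using set_take_nth[OF y] ltC by auto
    obtain t' where t': "i \<le> t'" "t' < length D" "z = D!t'" using set_drop_nth[OF z] by auto
    have ne: "i \<noteq> r - 1" using t' lD by auto
    have "y \<le> C!(q-r+i)" using t sorted_nth_mono[OF sC, of t "q-r+i"] lC i r by auto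
    also have "\<dots> \<le> D!i" using i(2) ne by simp
    also have "\<dots> \<le> z" using t' sorted_nth_mono[OF sD] by auto
    finally show "y \<le> z" .
  qed
  show lA: "length A = p" using A lC lD i r by simp
  show lB: "length B = q" using B lC lD i r by simp
  show "B!(q-r+i) \<le> A!i"
  proof -
    have "B!(q-r+i) = C!(q-r+i)" using B ltC by (simp add: nth_append)
    also have "\<dots> \<le> C!(q-r+i+1)" using sorted_nth_mono[OF sC] lC i r by auto
    also have "\<dots> = A!i" using A ltD lC i r by (simp add: nth_append)
    finally show ?thesis .
  qed
  show "\<forall>i'<i. A!i' < B!(q-r+i')"
  proof (intro allI impI)
    fix i' assume i': "i' < i"
    have "A!i' = D!i'" using A ltD i' by (simp add: nth_append)
    moreover have "B!(q-r+i') = C!(q-r+i')" using B ltC i' by (simp add: nth_append)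
    ultimately show "A!i' < B!(q-r+i')" using i(3) i' by auto
  qed
  have ltB: "length (take (q-r+i+1) B) = q-r+i+1" using lB i r by simp
  show "take (q-r+i+1) B @ drop i A = C" using A B ltC ltD by simp
  show "take i A @ drop (q-r+i+1) B = D" using A B ltC ltD by simp
qed

definition adjl :: "nat \<Rightarrow> nat list \<Rightarrow> nat list \<Rightarrow> bool" where
  "adjl b u v \<longleftrightarrow> (\<forall>j<b. u!j < v!(length v - b + j))"

fun adjs :: "nat list \<Rightarrow> nat list list \<Rightarrow> bool" where
  "adjs (b#bs) (u#v#ws) = (adjl b u v \<and> adjs bs (v#ws))"
| "adjs _ _ = True"

definition goodw :: "nat \<Rightarrow> nat list \<Rightarrow> bool" where
  "goodw n w \<longleftrightarrow> sorted w \<and> set w \<subseteq> {..<n}"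

definition RT :: "nat \<Rightarrow> nat list \<Rightarrow> nat list \<Rightarrow> nat list list set" where
  "RT n \<alpha> \<beta> = {ws. map length ws = \<alpha> \<and> (\<forall>w\<in>set ws. goodw n w) \<and> adjs \<beta> ws}"

definition wt :: "(nat \<Rightarrow> 'a::comm_ring_1) \<Rightarrow> nat list list \<Rightarrow> 'a" where
  "wt x ws = prod_list (map x (concat ws))"

definition G :: "nat \<Rightarrow> (nat \<Rightarrow> 'a::comm_ring_1) \<Rightarrow> nat list \<Rightarrow> nat list \<Rightarrow> 'a" where
  "G n x \<alpha> \<beta> = (\<Sum>ws\<in>RT n \<alpha> \<beta>. wt x ws)"

lemma finite_RT: "finite (RT n \<alpha> \<beta>)"
proof -
  let ?m = "Max (insert 0 (set \<alpha>))"
  let ?W = "{w. set w \<subseteq> {..<n} \<and> length w \<le> ?m}"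
  have fW: "finite ?W" using finite_lists_length_le[of "{..<n}" ?m] by simp
  have "RT n \<alpha> \<beta> \<subseteq> {ws. set ws \<subseteq> ?W \<and> length ws = length \<alpha>}"
  proof
    fix ws assume "ws \<in> RT n \<alpha> \<beta>"
    hence h: "map length ws = \<alpha>" "\<forall>w\<in>set ws. goodw n w" by (auto simp: RT_def)
    have "set ws \<subseteq> ?W"
    proof
      fix w assume w: "w \<in> set ws"
      have "length w \<in> set \<alpha>" using w h(1) by force
      hence "length w \<le> ?m" by simp
      thus "w \<in> ?W" using w h(2) by (auto simp: goodw_def)
    qed
    moreover have "length ws = length \<alpha>" using h(1) by (metis length_map)
    ultimately show "ws \<in> {ws. set ws \<subseteq> ?W \<and> length ws = length \<alpha>}" by simp
  qed
  moreover have "finite {ws. set ws \<subseteq> ?W \<and> length ws = length \<alpha>}"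
    using finite_lists_length_eq[OF fW] by simp
  ultimately show ?thesis by (rule finite_subset)
qed

lemma adjs_append:
  "length bs1 + 1 = length ws1 \<Longrightarrow> ws2 \<noteq> [] \<Longrightarrow>
   adjs (bs1 @ b # bs2) (ws1 @ ws2) = (adjs bs1 ws1 \<and> adjl b (last ws1) (hd ws2) \<and> adjs bs2 ws2)"
proof (induction ws1 arbitrary: bs1)
  case Nil then show ?case by simp
next
  case (Cons w ws1)
  show ?case
  proof (cases ws1)
    case Nil
    then show ?thesis using Cons.prems by (cases ws2) auto
  next
    case (Cons w' ws1')
    then obtain c bs1' where bs1: "bs1 = c # bs1'" using Cons.prems by (cases bs1) auto
    have IH: "adjs (bs1' @ b # bs2) (ws1 @ ws2) = (adjs bs1' ws1 \<and> adjl b (last ws1) (hd ws2) \<and> adjs bs2 ws2)"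
      using Cons.IH[of bs1'] Cons.prems bs1 by simp
    show ?thesis using IH Cons bs1 by simp
  qed
qed

lemma wt_append: "wt x (ws1 @ ws2) = wt x ws1 * wt x ws2"
  by (simp add: wt_def)

lemma wt_Cons: "wt x (w # ws) = prod_list (map x w) * wt x ws"
  by (simp add: wt_def)

lemma G_prod:
  assumes "length Ab + 1 = length A" "B \<noteq> []"
  shows "G n x (A @ B) (Ab @ 0 # Bb) = G n x A Ab * G n x B Bb"
proof -
  have A0: "A \<noteq> []" using assms(1) by auto
  have "G n x (A @ B) (Ab @ 0 # Bb) = (\<Sum>p\<in>RT n A Ab \<times> RT n B Bb. wt x (fst p @ snd p))"
    unfolding G_def
  proof (rule sum.reindex_bij_witness[where i="\<lambda>p. fst p @ snd p" and j="\<lambda>ws. (take (length A) ws, drop (length A) ws)"])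
    fix ws assume ws: "ws \<in> RT n (A @ B) (Ab @ 0 # Bb)"
    then show "fst (take (length A) ws, drop (length A) ws) @ snd (take (length A) ws, drop (length A) ws) = ws" by simp
    have ml: "map length ws = A @ B" and g: "\<forall>w\<in>set ws. goodw n w" and ad: "adjs (Ab @ 0 # Bb) ws"
      using ws by (auto simp: RT_def)
    have l1: "map length (take (length A) ws) = A" using ml by (metis append_eq_conv_conj take_map length_map)
    have l2: "map length (drop (length A) ws) = B" using ml by (metis append_eq_conv_conj drop_map length_map)
    have ne: "drop (length A) ws \<noteq> []" using l2 assms(2) by auto
    have lt: "length Ab + 1 = length (take (length A) ws)" using l1 assms(1) by (metis length_map)
    have "adjs (Ab @ 0 # Bb) (take (length A) ws @ drop (length A) ws)" using ad by simp
    hence "adjs Ab (take (length A) ws) \<and> adjs Bb (drop (length A) ws)"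
      using adjs_append[OF lt ne] by simp
    then show "(take (length A) ws, drop (length A) ws) \<in> RT n A Ab \<times> RT n B Bb"
      using l1 l2 g by (auto simp: RT_def dest: in_set_takeD in_set_dropD)
    show "wt x (fst (take (length A) ws, drop (length A) ws) @ snd (take (length A) ws, drop (length A) ws)) = wt x ws"
      by simp
  next
    fix p assume p: "p \<in> RT n A Ab \<times> RT n B Bb"
    obtain w1 w2 where pp: "p = (w1, w2)" by (cases p)
    have h1: "map length w1 = A" "\<forall>w\<in>set w1. goodw n w" "adjs Ab w1" using p pp by (auto simp: RT_def)
    have h2: "map length w2 = B" "\<forall>w\<in>set w2. goodw n w" "adjs Bb w2" using p pp by (auto simp: RT_def)
    have lA: "length w1 = length A" using h1(1) by (metis length_map)
    show "(take (length A) (fst p @ snd p), drop (length A) (fst p @ snd p)) = p" using pp lA by simp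
    have ne: "w2 \<noteq> []" using h2(1) assms(2) by auto
    have lt: "length Ab + 1 = length w1" using lA assms(1) by simp
    show "fst p @ snd p \<in> RT n (A @ B) (Ab @ 0 # Bb)"
      using h1 h2 pp adjs_append[OF lt ne, of 0 Bb] by (auto simp: RT_def adjl_def)
  qed
  also have "\<dots> = (\<Sum>w1\<in>RT n A Ab. \<Sum>w2\<in>RT n B Bb. wt x w1 * wt x w2)"
    by (simp add: sum.cartesian_product case_prod_beta wt_append)
  also have "\<dots> = G n x A Ab * G n x B Bb"
    unfolding G_def sum_product by simp
  finally show ?thesis .
qed

lemma adjs_append2:
  "length bs1 + 1 = length ws1 \<Longrightarrow> adjs (bs1 @ bs2) (ws1 @ ws2) = (adjs bs1 ws1 \<and> adjs bs2 (last ws1 # ws2))"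
proof (induction ws1 arbitrary: bs1)
  case Nil then show ?case by simp
next
  case (Cons w ws1)
  show ?case
  proof (cases ws1)
    case Nil
    then show ?thesis using Cons.prems by simp
  next
    case (Cons w' ws1')
    then obtain c bs1' where bs1: "bs1 = c # bs1'" using Cons.prems by (cases bs1) auto
    have IH: "adjs (bs1' @ bs2) (ws1 @ ws2) = (adjs bs1' ws1 \<and> adjs bs2 (last ws1 # ws2))"
      using Cons.IH[of bs1'] Cons.prems bs1 by simp
    show ?thesis using IH Cons bs1 by simp
  qed
qed

lemma adjl_suffix:
  assumes "g \<le> m" "m \<le> length A" "m \<le> length C" "drop (length A - m) A = drop (length C - m) C"
  shows "adjl g u A = adjl g u C"
proof -
  have "A!(length A - g + j) = C!(length C - g + j)" if "j < g" for j
  proof -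
    have e1: "(length A - m) + (m - g + j) = length A - g + j" using assms that by simp
    have e2: "(length C - m) + (m - g + j) = length C - g + j" using assms that by simp
    have d1: "drop (length A - m) A ! (m - g + j) = A!((length A - m) + (m - g + j))"
      by (rule nth_drop) simp
    have d2: "drop (length C - m) C ! (m - g + j) = C!((length C - m) + (m - g + j))"
      by (rule nth_drop) simp
    have "A!(length A - g + j) = drop (length A - m) A ! (m - g + j)" using d1 unfolding e1 by (rule sym)
    also have "\<dots> = drop (length C - m) C ! (m - g + j)" by (simp only: assms(4))
    also have "\<dots> = C!(length C - g + j)" using d2 unfolding e2 .
    finally show ?thesis .
  qed
  thus ?thesis unfolding adjl_def by auto
qed

lemma adjl_prefix:
  assumes "g \<le> m" "take m B = take m C"
  shows "adjl g B v = adjl g C v"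
proof -
  have "B!j = C!j" if "j < g" for j
    using assms that by (metis nth_take order_less_le_trans)
  moreover have "length B - g = length C - g \<or> True" by simp
  ultimately show ?thesis unfolding adjl_def by auto
qed

lemma adjs_snoc:
  assumes "length xb = length wX"
  shows "adjs xb (wX @ [A]) = (wX = [] \<or> (adjs (butlast xb) wX \<and> adjl (last xb) (last wX) A))"
proof (cases "wX = []")
  case True thus ?thesis by simp
next
  case False
  hence xbne: "xb \<noteq> []" using assms by auto
  have e: "xb = butlast xb @ [last xb]" using xbne by simp
  have l: "length (butlast xb) + 1 = length wX" using assms False xbne by simp
  have "adjs xb (wX @ [A]) = adjs (butlast xb @ [last xb]) (wX @ [A])" using e by simp
  also have "\<dots> = (adjs (butlast xb) wX \<and> adjs [last xb] [last wX, A])"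
    by (rule adjs_append2[OF l])
  finally show ?thesis using False by simp
qed

lemma glueX_inv:
  assumes "length xb = length wX" "wX \<noteq> [] \<Longrightarrow> last xb \<le> m" "m \<le> length A" "m \<le> length C"
    "drop (length A - m) A = drop (length C - m) C"
  shows "adjs xb (wX @ [A]) = adjs xb (wX @ [C])"
  using adjs_snoc[OF assms(1), of A] adjs_snoc[OF assms(1), of C] adjl_suffix[OF _ assms(3-5)] assms(2)
  by metis

lemma glueY_inv:
  assumes "wY \<noteq> [] \<Longrightarrow> hd yb \<le> m" "take m B = take m C"
  shows "adjs yb (B # wY) = adjs yb (C # wY)"
proof (cases wY)
  case Nil thus ?thesis by (cases yb) auto
next
  case (Cons v wY')
  show ?thesis
  proof (cases yb)
    case Nil thus ?thesis using Cons by simp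
  next
    case (Cons g yb')
    have "g \<le> m" using assms(1) Cons \<open>wY = v # wY'\<close> by simp
    thus ?thesis using adjl_prefix[OF _ assms(2)] Cons \<open>wY = v # wY'\<close> by simp
  qed
qed

lemma RT2_iff:
  assumes "length xb = length X" and lw: "length wX = length X"
  shows "wX @ A # B # wY \<in> RT n (X @ p # q # Y) (xb @ b # yb) \<longleftrightarrow>
    map length wX = X \<and> length A = p \<and> length B = q \<and> map length wY = Y \<and>
    (\<forall>w\<in>set wX. goodw n w) \<and> goodw n A \<and> goodw n B \<and> (\<forall>w\<in>set wY. goodw n w) \<and>
    adjs xb (wX @ [A]) \<and> adjl b A B \<and> adjs yb (B # wY)"
proof -
  have "map length (wX @ A # B # wY) = X @ p # q # Y \<longleftrightarrow>
      map length wX = X \<and> length A = p \<and> length B = q \<and> map length wY = Y"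
  proof
    assume h: "map length (wX @ A # B # wY) = X @ p # q # Y"
    hence "map length wX = X \<and> map length (A # B # wY) = p # q # Y"
      using lw by (simp add: append_eq_append_conv)
    thus "map length wX = X \<and> length A = p \<and> length B = q \<and> map length wY = Y"
      using h by simp
  qed auto
  moreover
  { assume "map length wX = X"
    hence l: "length xb + 1 = length (wX @ [A])" using assms by auto
    have "adjs (xb @ b # yb) (wX @ A # B # wY) = adjs (xb @ b # yb) ((wX @ [A]) @ B # wY)" by simp
    also have "\<dots> = (adjs xb (wX @ [A]) \<and> adjs (b # yb) (A # B # wY))"
      using adjs_append2[OF l] by simp
    finally have "adjs (xb @ b # yb) (wX @ A # B # wY) = (adjs xb (wX @ [A]) \<and> adjl b A B \<and> adjs yb (B # wY))"
      by simp }
  ultimately show ?thesis unfolding RT_def by auto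
qed

lemma RT1_iff:
  assumes "length xb = length X" and lw: "length wX = length X"
  shows "wX @ C # wY \<in> RT n (X @ c # Y) (xb @ yb) \<longleftrightarrow>
    map length wX = X \<and> length C = c \<and> map length wY = Y \<and>
    (\<forall>w\<in>set wX. goodw n w) \<and> goodw n C \<and> (\<forall>w\<in>set wY. goodw n w) \<and>
    adjs xb (wX @ [C]) \<and> adjs yb (C # wY)"
proof -
  have "map length (wX @ C # wY) = X @ c # Y \<longleftrightarrow>
      map length wX = X \<and> length C = c \<and> map length wY = Y"
  proof
    assume h: "map length (wX @ C # wY) = X @ c # Y"
    hence "map length wX = X \<and> map length (C # wY) = c # Y"
      using lw by (simp add: append_eq_append_conv)
    thus "map length wX = X \<and> length C = c \<and> map length wY = Y"
      using h by simp
  qed auto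
  moreover
  { assume "map length wX = X"
    hence l: "length xb + 1 = length (wX @ [C])" using assms by auto
    have "adjs (xb @ yb) (wX @ C # wY) = adjs (xb @ yb) ((wX @ [C]) @ wY)" by simp
    also have "\<dots> = (adjs xb (wX @ [C]) \<and> adjs yb (C # wY))"
      using adjs_append2[OF l] by simp
    finally have "adjs (xb @ yb) (wX @ C # wY) = (adjs xb (wX @ [C]) \<and> adjs yb (C # wY))" . }
  ultimately show ?thesis unfolding RT_def by auto
qed

lemma RT_decomp1:
  assumes "ws \<in> RT n (X @ c # Y) bs"
  shows "\<exists>wX C wY. ws = wX @ C # wY \<and> length wX = length X"
proof -
  have m: "map length ws = X @ c # Y" using assms by (simp add: RT_def)
  hence "length ws = length (X @ c # Y)" by (metis length_map)
  hence lt: "length X < length ws" by simp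
  have "ws = take (length X) ws @ ws!(length X) # drop (Suc (length X)) ws"
    by (rule id_take_nth_drop[OF lt])
  moreover have "length (take (length X) ws) = length X" using lt by simp
  ultimately show ?thesis by blast
qed

lemma RT_decomp2:
  assumes "ws \<in> RT n (X @ p # q # Y) bs"
  shows "\<exists>wX A B wY. ws = wX @ A # B # wY \<and> length wX = length X"
proof -
  obtain wX C wY where e: "ws = wX @ C # wY" and l: "length wX = length X"
    using RT_decomp1[of ws n X p "q # Y" bs] assms by auto
  have m: "map length ws = X @ p # q # Y" using assms by (simp add: RT_def)
  hence "length ws = length (X @ p # q # Y)" by (metis length_map)
  hence "wY \<noteq> []" using e l by auto
  then obtain B wY' where "wY = B # wY'" by (cases wY) auto
  thus ?thesis using e l by blast
qed

lemma prod_list_mset_eq: "mset l1 = mset l2 \<Longrightarrow> prod_list (map x l1) = prod_list (map (x::nat\<Rightarrow>'a::comm_ring_1) l2)"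
  by (metis mset_map prod_mset_prod_list)

definition jfw :: "nat \<Rightarrow> nat \<Rightarrow> nat list \<Rightarrow> nat list \<Rightarrow> nat" where
  "jfw r q A B = (LEAST j. j < r \<and> B!(q-r+j) \<le> A!j)"
definition swC :: "nat \<Rightarrow> nat \<Rightarrow> nat list \<Rightarrow> nat list \<Rightarrow> nat list" where
  "swC r q A B = take (q-r+jfw r q A B+1) B @ drop (jfw r q A B) A"
definition swD :: "nat \<Rightarrow> nat \<Rightarrow> nat list \<Rightarrow> nat list \<Rightarrow> nat list" where
  "swD r q A B = take (jfw r q A B) A @ drop (q-r+jfw r q A B+1) B"
definition ibw :: "nat \<Rightarrow> nat \<Rightarrow> nat list \<Rightarrow> nat list \<Rightarrow> nat" where
  "ibw r q C D = (LEAST i. i < r \<and> (i = r-1 \<or> C!(q-r+i) \<le> D!i))"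
definition unA :: "nat \<Rightarrow> nat \<Rightarrow> nat list \<Rightarrow> nat list \<Rightarrow> nat list" where
  "unA r q C D = take (ibw r q C D) D @ drop (q-r+ibw r q C D+1) C"
definition unB :: "nat \<Rightarrow> nat \<Rightarrow> nat list \<Rightarrow> nat list \<Rightarrow> nat list" where
  "unB r q C D = take (q-r+ibw r q C D+1) C @ drop (ibw r q C D) D"

lemma fw_word:
  assumes sA: "sorted A" and sB: "sorted B" and lA: "length A = p" and lB: "length B = q"
    and r: "1 \<le> r" "r \<le> p" "r \<le> q" and na: "\<not> adjl r A B"
  shows "sorted (swC r q A B)" "sorted (swD r q A B)" "length (swC r q A B) = p+q-r+1"
    "length (swD r q A B) = r-1"
    "mset (swC r q A B) + mset (swD r q A B) = mset A + mset B"
    "take (q-r+1) (swC r q A B) = take (q-r+1) B" "drop q (swC r q A B) = drop (r-1) A"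
    "unA r q (swC r q A B) (swD r q A B) = A" "unB r q (swC r q A B) (swD r q A B) = B"
proof -
  obtain j where jj: "j < r" "\<not> A!j < B!(length B - r + j)" using na unfolding adjl_def by blast
  have ex: "\<exists>j. j < r \<and> B!(q-r+j) \<le> A!j" using jj lB by (intro exI[of _ j]) (simp add: not_less)
  let ?j = "jfw r q A B"
  have j1: "?j < r \<and> B!(q-r+?j) \<le> A!?j" unfolding jfw_def by (rule LeastI_ex[OF ex])
  have j3: "\<forall>i<?j. A!i < B!(q-r+i)"
  proof (intro allI impI)
    fix i assume "i < ?j"
    hence "\<not> (i < r \<and> B!(q-r+i) \<le> A!i)" unfolding jfw_def by (rule not_less_Least)
    moreover have "i < r" using \<open>i < ?j\<close> j1 by simp
    ultimately show "A!i < B!(q-r+i)" by simp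
  qed
  have Cd: "swC r q A B = take (q-r+?j+1) B @ drop ?j A" unfolding swC_def ..
  have Dd: "swD r q A B = take ?j A @ drop (q-r+?j+1) B" unfolding swD_def ..
  note F = sw_fwd[of A B p q r "?j" "swC r q A B" "swD r q A B", OF sA sB lA lB r conjunct1[OF j1] conjunct2[OF j1] j3 Cd Dd]
  show "sorted (swC r q A B)" by (rule F(1))
  show "sorted (swD r q A B)" by (rule F(2))
  show "length (swC r q A B) = p+q-r+1" by (rule F(3))
  show "length (swD r q A B) = r-1" by (rule F(4))
  show "mset (swC r q A B) + mset (swD r q A B) = mset A + mset B" by (rule F(5))
  show "take (q-r+1) (swC r q A B) = take (q-r+1) B" by (rule F(6))
  show "drop q (swC r q A B) = drop (r-1) A" by (rule F(7))
  have i: "ibw r q (swC r q A B) (swD r q A B) = ?j" unfolding ibw_def using F(8) .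
  have "unA r q (swC r q A B) (swD r q A B) = take (jfw r q A B) (swD r q A B) @ drop (q-r+jfw r q A B+1) (swC r q A B)"
    by (simp only: unA_def i)
  thus "unA r q (swC r q A B) (swD r q A B) = A" using F(9) by (rule trans)
  have "unB r q (swC r q A B) (swD r q A B) = take (q-r+jfw r q A B+1) (swC r q A B) @ drop (jfw r q A B) (swD r q A B)"
    by (simp only: unB_def i)
  thus "unB r q (swC r q A B) (swD r q A B) = B" using F(10) by (rule trans)
qed

lemma bw_word:
  assumes sC: "sorted C" and sD: "sorted D" and lC: "length C = p+q-r+1" and lD: "length D = r-1"
    and r: "1 \<le> r" "r \<le> p" "r \<le> q"
  shows "sorted (unA r q C D)" "sorted (unB r q C D)" "length (unA r q C D) = p"
    "length (unB r q C D) = q" "\<not> adjl r (unA r q C D) (unB r q C D)"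
    "swC r q (unA r q C D) (unB r q C D) = C" "swD r q (unA r q C D) (unB r q C D) = D"
proof -
  let ?i = "ibw r q C D"
  have ex: "\<exists>i. i < r \<and> (i = r-1 \<or> C!(q-r+i) \<le> D!i)" using r by (intro exI[of _ "r-1"]) auto
  have i1: "?i < r \<and> (?i = r-1 \<or> C!(q-r+?i) \<le> D!?i)" unfolding ibw_def by (rule LeastI_ex[OF ex])
  have i3: "\<forall>i'<?i. \<not> (C!(q-r+i') \<le> D!i')"
  proof (intro allI impI)
    fix i assume "i < ?i"
    hence "\<not> (i < r \<and> (i = r-1 \<or> C!(q-r+i) \<le> D!i))" unfolding ibw_def by (rule not_less_Least)
    moreover have "i < r" "i \<noteq> r - 1" using \<open>i < ?i\<close> i1 by auto
    ultimately show "\<not> (C!(q-r+i) \<le> D!i)" by simp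
  qed
  have Ad: "unA r q C D = take ?i D @ drop (q-r+?i+1) C" unfolding unA_def ..
  have Bd: "unB r q C D = take (q-r+?i+1) C @ drop ?i D" unfolding unB_def ..
  note B = sw_bwd[of C D p q r ?i "unA r q C D" "unB r q C D", OF sC sD lC lD r conjunct1[OF i1] conjunct2[OF i1] i3 Ad Bd]
  show "sorted (unA r q C D)" "sorted (unB r q C D)" "length (unA r q C D) = p"
    "length (unB r q C D) = q" using B by auto
  show na: "\<not> adjl r (unA r q C D) (unB r q C D)"
  proof
    assume "adjl r (unA r q C D) (unB r q C D)"
    hence "unA r q C D ! ?i < unB r q C D ! (length (unB r q C D) - r + ?i)"
      unfolding adjl_def using i1 by blast
    thus False using B(4,5) by simp
  qed
  have j: "jfw r q (unA r q C D) (unB r q C D) = ?i"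
    unfolding jfw_def
  proof (rule Least_equality)
    show "?i < r \<and> unB r q C D ! (q - r + ?i) \<le> unA r q C D ! ?i" using B(5) i1 by simp
  next
    fix y assume y: "y < r \<and> unB r q C D ! (q - r + y) \<le> unA r q C D ! y"
    show "?i \<le> y"
    proof (rule ccontr)
      assume "\<not> ?i \<le> y"
      hence "y < ?i" by simp
      thus False using B(6) y by auto
    qed
  qed
  show "swC r q (unA r q C D) (unB r q C D) = C" "swD r q (unA r q C D) (unB r q C D) = D"
  proof -
    have "swC r q (unA r q C D) (unB r q C D) = take (q-r+?i+1) (unB r q C D) @ drop ?i (unA r q C D)"
      by (simp only: swC_def j)
    thus "swC r q (unA r q C D) (unB r q C D) = C" using B(7) by (rule trans)
    have "swD r q (unA r q C D) (unB r q C D) = take ?i (unA r q C D) @ drop (q-r+?i+1) (unB r q C D)"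
      by (simp only: swD_def j)
    thus "swD r q (unA r q C D) (unB r q C D) = D" using B(8) by (rule trans)
  qed
qed

lemma set_sub_mset: "mset C + mset D = mset A + mset B \<Longrightarrow> set C \<union> set D = set A \<union> set B"
  by (metis set_mset_mset set_mset_union)

lemma G_R2:
  fixes x :: "nat \<Rightarrow> 'a::comm_ring_1"
  assumes lx: "length xb = length X" and r: "1 \<le> r" "r \<le> p" "r \<le> q"
    and gx: "X \<noteq> [] \<Longrightarrow> last xb \<le> p - r + 1" and gy: "Y \<noteq> [] \<Longrightarrow> hd yb \<le> q - r + 1"
  shows "G n x (X @ p # q # Y) (xb @ 0 # yb) = G n x (X @ p # q # Y) (xb @ r # yb)
          + G n x [r-1] [] * G n x (X @ (p+q-r+1) # Y) (xb @ yb)"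
proof -
  define S0 where "S0 = RT n (X @ p # q # Y) (xb @ 0 # yb)"
  define Sr where "Sr = RT n (X @ p # q # Y) (xb @ r # yb)"
  define SL where "SL = RT n (X @ (p+q-r+1) # Y) (xb @ yb)"
  define S1 where "S1 = RT n [r-1] []"
  define s where "s = length X"
  define fw where "fw = (\<lambda>ws::nat list list. ([swD r q (ws!s) (ws!(s+1))],
       take s ws @ swC r q (ws!s) (ws!(s+1)) # drop (s+2) ws))"
  define bw where "bw = (\<lambda>(ds::nat list list, vs::nat list list).
       take s vs @ unA r q (vs!s) (hd ds) # unB r q (vs!s) (hd ds) # drop (s+1) vs)"
  have gXm: "wX \<noteq> [] \<Longrightarrow> last xb \<le> p - r + 1" if "length wX = length X" for wX :: "nat list list"
    using gx that by (metis length_0_conv)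
  have gYm: "wY \<noteq> [] \<Longrightarrow> hd yb \<le> q - r + 1" if "map length wY = Y" for wY :: "nat list list"
    using gy that by (metis Nil_is_map_conv)
  have sub: "Sr \<subseteq> S0"
  proof
    fix ws assume ws: "ws \<in> Sr"
    obtain wX A B wY where e: "ws = wX @ A # B # wY" and lw: "length wX = length X"
      using RT_decomp2 ws unfolding Sr_def by blast
    show "ws \<in> S0" using ws RT2_iff[OF lx lw, of A B wY n p q Y r yb] RT2_iff[OF lx lw, of A B wY n p q Y 0 yb]
      unfolding Sr_def S0_def e by (simp add: adjl_def)
  qed
  have fS0: "finite S0" unfolding S0_def by (rule finite_RT)
  have "G n x (X @ p # q # Y) (xb @ 0 # yb) = sum (wt x) S0" unfolding G_def S0_def ..
  also have "\<dots> = sum (wt x) (S0 - Sr) + sum (wt x) Sr" by (rule sum.subset_diff[OF sub fS0])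
  also have "sum (wt x) (S0 - Sr) = (\<Sum>pr\<in>S1 \<times> SL. wt x (fst pr) * wt x (snd pr))"
  proof (rule sum.reindex_bij_witness[where i=bw and j=fw])
    fix a assume a: "a \<in> S0 - Sr"
    obtain wX A B wY where e: "a = wX @ A # B # wY" and lw: "length wX = length X"
      using RT_decomp2 a unfolding S0_def by blast
    have lxw: "length xb = length wX" using lx lw by simp
    have P0: "map length wX = X \<and> length A = p \<and> length B = q \<and> map length wY = Y \<and>
      (\<forall>w\<in>set wX. goodw n w) \<and> goodw n A \<and> goodw n B \<and> (\<forall>w\<in>set wY. goodw n w) \<and>
      adjs xb (wX @ [A]) \<and> adjl 0 A B \<and> adjs yb (B # wY)"
      using a RT2_iff[OF lx lw, of A B wY n p q Y 0 yb] unfolding S0_def e by simp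
    have na: "\<not> adjl r A B"
      using a P0 RT2_iff[OF lx lw, of A B wY n p q Y r yb] unfolding Sr_def e by simp
    have sA: "sorted A" and sB: "sorted B" using P0 by (auto simp: goodw_def)
    note W = fw_word[OF sA sB conjunct1[OF conjunct2[OF P0]] conjunct1[OF conjunct2[OF conjunct2[OF P0]]] r na]
    let ?C = "swC r q A B" and ?D = "swD r q A B"
    have fwa: "fw a = ([?D], wX @ ?C # wY)" unfolding fw_def e s_def using lw by (simp add: lw[symmetric] nth_append)
    show "bw (fw a) = a" unfolding fwa using W(8,9) lw by (simp add: bw_def s_def e lw[symmetric] nth_append)
    have setCD: "set ?C \<union> set ?D = set A \<union> set B" using W(5) by (rule set_sub_mset)
    have gC: "goodw n ?C" and gD: "goodw n ?D" using setCD W(1,2) P0 by (auto simp: goodw_def)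
    have ax: "adjs xb (wX @ [?C])"
    proof -
      have "adjs xb (wX @ [A]) = adjs xb (wX @ [?C])"
        by (rule glueX_inv[OF lxw gXm[OF lw]])
           (use P0 W(3,7) r in auto)
      thus ?thesis using P0 by simp
    qed
    have ay: "adjs yb (?C # wY)"
    proof -
      have "adjs yb (B # wY) = adjs yb (?C # wY)"
        by (rule glueY_inv[OF gYm[of wY]]) (use P0 W(6) in auto)
      thus ?thesis using P0 by simp
    qed
    have m1: "[?D] \<in> S1" unfolding S1_def RT_def using W(4) gD by simp
    have m2: "wX @ ?C # wY \<in> SL" unfolding SL_def using RT1_iff[OF lx lw, of ?C wY n "p+q-r+1" Y yb]
        using P0 W(3) gC ax ay by simp
    show "fw a \<in> S1 \<times> SL" unfolding fwa using m1 m2 by simp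
    have ms: "mset (?D @ concat wX @ ?C @ concat wY) = mset (concat wX @ A @ B @ concat wY)"
      using W(5) by (simp add: ac_simps)
    show "wt x (fst (fw a)) * wt x (snd (fw a)) = wt x a"
      unfolding fwa using prod_list_mset_eq[OF ms, of x] by (simp add: e wt_def)
  next
    fix b assume b: "b \<in> S1 \<times> SL"
    obtain ds vs where bb: "b = (ds, vs)" by (cases b)
    have ds: "ds \<in> RT n [r-1] []" and vs: "vs \<in> SL" using b bb unfolding S1_def by auto
    obtain D where dsD: "ds = [D]" and lD: "length D = r - 1" and gD: "goodw n D"
      using ds unfolding RT_def by (cases ds) auto
    obtain wX C wY where e: "vs = wX @ C # wY" and lw: "length wX = length X"
      using RT_decomp1 vs unfolding SL_def by blast
    have lxw: "length xb = length wX" using lx lw by simp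
    have P1: "map length wX = X \<and> length C = p+q-r+1 \<and> map length wY = Y \<and>
      (\<forall>w\<in>set wX. goodw n w) \<and> goodw n C \<and> (\<forall>w\<in>set wY. goodw n w) \<and>
      adjs xb (wX @ [C]) \<and> adjs yb (C # wY)"
      using vs RT1_iff[OF lx lw, of C wY n "p+q-r+1" Y yb] unfolding SL_def e by simp
    have sC: "sorted C" and sD: "sorted D" using P1 gD by (auto simp: goodw_def)
    note V = bw_word[OF sC sD conjunct1[OF conjunct2[OF P1]] lD r]
    let ?A = "unA r q C D" and ?B = "unB r q C D"
    note W = fw_word[OF V(1,2,3,4) r V(5)]
    have bwb: "bw b = wX @ ?A # ?B # wY" unfolding bb bw_def e dsD s_def by (simp add: lw[symmetric] nth_append)
    show "fw (bw b) = b" unfolding bwb using V(6,7) by (simp add: fw_def bb e dsD s_def lw[symmetric] nth_append)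
    have setCD: "set C \<union> set D = set ?A \<union> set ?B" using W(5) V(6,7) set_sub_mset by metis
    have gA: "goodw n ?A" and gB: "goodw n ?B" using setCD V(1,2) P1 gD by (auto simp: goodw_def)
    have ax: "adjs xb (wX @ [?A])"
    proof -
      have "adjs xb (wX @ [?A]) = adjs xb (wX @ [C])"
        by (rule glueX_inv[OF lxw gXm[OF lw]])
           (use P1 V(3) W(7) V(6) r in auto)
      thus ?thesis using P1 by simp
    qed
    have ay: "adjs yb (?B # wY)"
    proof -
      have "adjs yb (?B # wY) = adjs yb (C # wY)"
        by (rule glueY_inv[OF gYm[of wY]]) (use P1 W(6) V(6) in auto)
      thus ?thesis using P1 by simp
    qed
    have in0: "wX @ ?A # ?B # wY \<in> S0"
      unfolding S0_def using RT2_iff[OF lx lw, of ?A ?B wY n p q Y 0 yb] P1 V(3,4) gA gB ax ay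
      by (simp add: adjl_def)
    have nr: "wX @ ?A # ?B # wY \<notin> Sr"
      unfolding Sr_def using RT2_iff[OF lx lw, of ?A ?B wY n p q Y r yb] V(5) by simp
    show "bw b \<in> S0 - Sr" unfolding bwb using in0 nr by simp
  qed
  also have "\<dots> = G n x [r-1] [] * G n x (X @ (p+q-r+1) # Y) (xb @ yb)"
    unfolding G_def S1_def[symmetric] SL_def[symmetric] sum_product
    by (simp add: sum.cartesian_product case_prod_beta)
  finally show ?thesis unfolding G_def Sr_def by (simp add: add.commute)
qed

lemma G_H0: "G n x [0] [] = 1"
proof -
  have "RT n [0] [] = {[[]]}" unfolding RT_def goodw_def by (auto simp: length_Suc_conv)
  thus ?thesis unfolding G_def wt_def by simp
qed

lemma G_PE:
  fixes x :: "nat \<Rightarrow> 'a::comm_ring_1"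
  assumes lx: "length xb = length X" and r: "1 \<le> r" "r \<le> p" "r \<le> q"
    and gx: "X \<noteq> [] \<Longrightarrow> last xb \<le> p - r + 1" and gy: "Y \<noteq> [] \<Longrightarrow> hd yb \<le> q - r + 1"
    and L: "L = p + q - r + 1" and h: "h = r - 1"
  shows "G n x (X @ p # q # Y) (xb @ r # yb) = G n x (X @ [p]) xb * G n x (q # Y) yb - G n x [h] [] * G n x (X @ L # Y) (xb @ yb)"
proof -
  have "G n x (X @ p # q # Y) (xb @ 0 # yb) = G n x ((X @ [p]) @ (q # Y)) (xb @ 0 # yb)" by simp
  also have "\<dots> = G n x (X @ [p]) xb * G n x (q # Y) yb" by (rule G_prod) (use lx in auto)
  finally have e: "G n x (X @ p # q # Y) (xb @ 0 # yb) = G n x (X @ [p]) xb * G n x (q # Y) yb" .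
  show ?thesis using G_R2[OF lx r gx gy, where n=n and x=x] e L h by (simp add: algebra_simps)
qed

lemma G_T4:
  fixes x :: "nat \<Rightarrow> 'a::comm_ring_1"
  assumes lq: "length Qb = length Q" and gq: "Q \<noteq> [] \<Longrightarrow> last Qb \<le> 1" and K: "2 \<le> K"
    and lt: "length \<tau>b = length \<tau>" and t1: "\<tau> \<noteq> [] \<Longrightarrow> hd \<tau>b = 1 \<and> 1 \<le> hd \<tau>"
    and t2: "2 \<le> length \<tau> \<Longrightarrow> \<tau>b!1 \<le> \<tau>!0"
  shows "(if \<tau> = [] then 0 else G n x (Q @ K # (K-1+hd \<tau>) # tl \<tau>) (Qb @ K # tl \<tau>b))
       = - G n x (Q @ [K]) Qb * G n x ((K-1) # \<tau>) \<tau>b + G n x [K-1] [] * G n x (Q @ K # \<tau>) (Qb @ \<tau>b)"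
proof (cases \<tau>)
  case Nil
  then show ?thesis using lt by simp
next
  case (Cons t1 \<tau>')
  then obtain \<tau>b' where tb: "\<tau>b = 1 # \<tau>b'" using lt t1 by (cases \<tau>b) auto
  have t1p: "1 \<le> t1" using t1 Cons by simp
  have lt': "length \<tau>b' = length \<tau>'" using lt Cons tb by simp
  have g2: "\<tau>' \<noteq> [] \<Longrightarrow> hd \<tau>b' \<le> t1"
  proof -
    assume "\<tau>' \<noteq> []"
    hence "2 \<le> length \<tau>" using Cons by (cases \<tau>') auto
    hence "\<tau>b!1 \<le> \<tau>!0" by (rule t2)
    moreover have "\<tau>b' \<noteq> []" using lt' \<open>\<tau>' \<noteq> []\<close> by auto
    ultimately show "hd \<tau>b' \<le> t1" using Cons tb by (cases \<tau>b') auto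
  qed
  have e1: "G n x (Q @ K # (K-1+t1) # \<tau>') (Qb @ K # \<tau>b')
     = G n x (Q @ [K]) Qb * G n x ((K-1+t1) # \<tau>') \<tau>b' - G n x [K-1] [] * G n x (Q @ (K+t1) # \<tau>') (Qb @ \<tau>b')"
    by (rule G_PE) (use lq gq K t1p g2 in auto)
  have e2: "G n x ([] @ (K-1) # t1 # \<tau>') ([] @ 1 # \<tau>b')
     = G n x ([] @ [K-1]) [] * G n x (t1 # \<tau>') \<tau>b' - G n x [0] [] * G n x ([] @ (K-1+t1) # \<tau>') ([] @ \<tau>b')"
    by (rule G_PE) (use K t1p g2 in auto)
  have e3: "G n x (Q @ K # t1 # \<tau>') (Qb @ 1 # \<tau>b')
     = G n x (Q @ [K]) Qb * G n x (t1 # \<tau>') \<tau>b' - G n x [0] [] * G n x (Q @ (K+t1) # \<tau>') (Qb @ \<tau>b')"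
    by (rule G_PE) (use lq gq K t1p g2 in auto)
  have e2': "G n x ((K-1) # t1 # \<tau>') (1 # \<tau>b')
     = G n x [K-1] [] * G n x (t1 # \<tau>') \<tau>b' - G n x ((K-1+t1) # \<tau>') \<tau>b'"
    using e2 by (simp add: G_H0)
  have e3': "G n x (Q @ K # t1 # \<tau>') (Qb @ 1 # \<tau>b')
     = G n x (Q @ [K]) Qb * G n x (t1 # \<tau>') \<tau>b' - G n x (Q @ (K+t1) # \<tau>') (Qb @ \<tau>b')"
    using e3 by (simp add: G_H0)
  have "G n x (Q @ K # (K-1+t1) # \<tau>') (Qb @ K # \<tau>b')
       = - G n x (Q @ [K]) Qb * G n x ((K-1) # t1 # \<tau>') (1 # \<tau>b') + G n x [K-1] [] * G n x (Q @ K # t1 # \<tau>') (Qb @ 1 # \<tau>b')"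
    unfolding e1 e2' e3' by (simp add: algebra_simps)
  thus ?thesis using Cons tb by simp
qed

lemmas LN = append_assoc append_Cons append_Nil

lemma G_Lstar:
  fixes x :: "nat \<Rightarrow> 'a::comm_ring_1"
  assumes lp: "length Pb = length P" and gp: "P \<noteq> [] \<Longrightarrow> last Pb \<le> 1" and a: "2 \<le> a"
    and lt: "length \<tau>b = length \<tau>" and t1: "\<tau> \<noteq> [] \<Longrightarrow> hd \<tau>b = 1 \<and> 1 \<le> hd \<tau>"
    and t2: "2 \<le> length \<tau> \<Longrightarrow> \<tau>b!1 \<le> \<tau>!0"
  shows "G n x (P @ a # (a+c-1) # (a+c) # \<tau>) (Pb @ 1 # (c+1) # \<tau>b)
       - G n x (P @ a # (a+c) # (a+c-1) # \<tau>) (Pb @ 1 # (c+1) # \<tau>b)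
       - (if \<tau> = [] then 0 else G n x (P @ a # (a+c) # (a+c-1+hd \<tau>) # tl \<tau>) (Pb @ 1 # (a+c) # tl \<tau>b))
     = - G n x (P @ (a+a+c-1) # (a+c) # \<tau>) (Pb @ (a+c) # \<tau>b)"
proof -
  have gy: "\<tau> \<noteq> [] \<Longrightarrow> hd \<tau>b \<le> 1" using t1 by simp
  have f1: "G n x ((P @ [a]) @ (a+c-1) # (a+c) # \<tau>) ((Pb @ [1]) @ (c+1) # \<tau>b)
     = G n x ((P @ [a]) @ [a+c-1]) (Pb @ [1]) * G n x ((a+c) # \<tau>) \<tau>b
       - G n x [c] [] * G n x ((P @ [a]) @ (a+a+c-1) # \<tau>) ((Pb @ [1]) @ \<tau>b)"
    by (rule G_PE) (use lp a gy in auto)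
  have f2: "G n x ((P @ [a]) @ (a+c) # (a+c-1) # \<tau>) ((Pb @ [1]) @ (c+1) # \<tau>b)
     = G n x ((P @ [a]) @ [a+c]) (Pb @ [1]) * G n x ((a+c-1) # \<tau>) \<tau>b
       - G n x [c] [] * G n x ((P @ [a]) @ (a+a+c-1) # \<tau>) ((Pb @ [1]) @ \<tau>b)"
    by (rule G_PE) (use lp a gy in auto)
  have f3: "(if \<tau> = [] then 0 else G n x ((P @ [a]) @ (a+c) # (a+c-1+hd \<tau>) # tl \<tau>) ((Pb @ [1]) @ (a+c) # tl \<tau>b))
       = - G n x ((P @ [a]) @ [a+c]) (Pb @ [1]) * G n x ((a+c-1) # \<tau>) \<tau>b
         + G n x [a+c-1] [] * G n x ((P @ [a]) @ (a+c) # \<tau>) ((Pb @ [1]) @ \<tau>b)"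
    by (rule G_T4) (use lp a lt t1 t2 in auto)
  have f4: "G n x (P @ (a+a+c-1) # (a+c) # \<tau>) (Pb @ (a+c) # \<tau>b)
     = G n x (P @ [a+a+c-1]) Pb * G n x ((a+c) # \<tau>) \<tau>b - G n x [a+c-1] [] * G n x (P @ (a+a+c) # \<tau>) (Pb @ \<tau>b)"
    by (rule G_PE) (use lp gp a gy in auto)
  have f5: "G n x (P @ a # (a+c-1) # []) (Pb @ 1 # [])
     = G n x (P @ [a]) Pb * G n x ((a+c-1) # []) [] - G n x [0] [] * G n x (P @ (a+a+c-1) # []) (Pb @ [])"
    by (rule G_PE) (use lp gp a in auto)
  have f6: "G n x (P @ a # (a+c) # \<tau>) (Pb @ 1 # \<tau>b)
     = G n x (P @ [a]) Pb * G n x ((a+c) # \<tau>) \<tau>b - G n x [0] [] * G n x (P @ (a+a+c) # \<tau>) (Pb @ \<tau>b)"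
    by (rule G_PE) (use lp gp a gy in auto)
  note f1' = f1[unfolded LN] and f2' = f2[unfolded LN] and f3' = f3[unfolded LN]
  note f5' = f5[unfolded G_H0 append_Nil2 mult_1_left]
  note f6' = f6[unfolded G_H0 mult_1_left]
  show ?thesis unfolding f1' f2' f3' f4 f5' f6' by (simp add: algebra_simps)
qed

lemma G_Bstar:
  fixes x :: "nat \<Rightarrow> 'a::comm_ring_1"
  assumes ls: "length \<sigma>b = length \<sigma>" and gs: "\<sigma> \<noteq> [] \<Longrightarrow> last \<sigma>b \<le> 1" and a: "2 \<le> a"
    and lt: "length \<tau>b = length \<tau>" and t1: "\<tau> \<noteq> [] \<Longrightarrow> hd \<tau>b = 1 \<and> 1 \<le> hd \<tau>"
    and t2: "2 \<le> length \<tau> \<Longrightarrow> \<tau>b!1 \<le> \<tau>!0"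
  shows "G n x (\<sigma> @ (a+c) # (a+c) # a # \<tau>) (\<sigma>b @ (c+1) # 1 # \<tau>b)
       - G n x (\<sigma> @ (a+c+1) # (a+c-1) # a # \<tau>) (\<sigma>b @ (c+1) # 1 # \<tau>b)
       + (G n x (\<sigma> @ (a+1) # (a+c-1) # (a+c) # \<tau>) (\<sigma>b @ 1 # (c+1) # \<tau>b)
        - G n x (\<sigma> @ (a+1) # (a+c) # (a+c-1) # \<tau>) (\<sigma>b @ 1 # (c+1) # \<tau>b))
     = G n x (\<sigma> @ (a+c) # (a+c) # a # \<tau>) (\<sigma>b @ (a+c) # 1 # \<tau>b)
       + G n x (\<sigma> @ (a+c+1) # (a+a+c-1) # \<tau>) (\<sigma>b @ (a+c) # \<tau>b)
       - G n x (\<sigma> @ (a+a+c) # (a+c) # \<tau>) (\<sigma>b @ (a+c) # \<tau>b)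
       + (if \<tau> = [] then 0 else G n x (\<sigma> @ (a+1) # (a+c) # (a+c-1+hd \<tau>) # tl \<tau>) (\<sigma>b @ 1 # (a+c) # tl \<tau>b))"
proof -
  have gy: "\<tau> \<noteq> [] \<Longrightarrow> hd \<tau>b \<le> 1" using t1 by simp
  have b1: "G n x (\<sigma> @ (a+c) # (a+c) # (a # \<tau>)) (\<sigma>b @ (c+1) # (1 # \<tau>b))
     = G n x (\<sigma> @ [a+c]) \<sigma>b * G n x ((a+c) # a # \<tau>) (1 # \<tau>b) - G n x [c] [] * G n x (\<sigma> @ (a+a+c) # a # \<tau>) (\<sigma>b @ 1 # \<tau>b)"
    by (rule G_PE) (use ls gs a in auto)
  have b2: "G n x (\<sigma> @ (a+c+1) # (a+c-1) # (a # \<tau>)) (\<sigma>b @ (c+1) # (1 # \<tau>b))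
     = G n x (\<sigma> @ [a+c+1]) \<sigma>b * G n x ((a+c-1) # a # \<tau>) (1 # \<tau>b) - G n x [c] [] * G n x (\<sigma> @ (a+a+c) # a # \<tau>) (\<sigma>b @ 1 # \<tau>b)"
    by (rule G_PE) (use ls gs a in auto)
  have b3: "G n x ((\<sigma> @ [a+1]) @ (a+c-1) # (a+c) # \<tau>) ((\<sigma>b @ [1]) @ (c+1) # \<tau>b)
     = G n x ((\<sigma> @ [a+1]) @ [a+c-1]) (\<sigma>b @ [1]) * G n x ((a+c) # \<tau>) \<tau>b
       - G n x [c] [] * G n x ((\<sigma> @ [a+1]) @ (a+a+c-1) # \<tau>) ((\<sigma>b @ [1]) @ \<tau>b)"
    by (rule G_PE) (use ls a gy in auto)
  have b4: "G n x ((\<sigma> @ [a+1]) @ (a+c) # (a+c-1) # \<tau>) ((\<sigma>b @ [1]) @ (c+1) # \<tau>b)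
     = G n x ((\<sigma> @ [a+1]) @ [a+c]) (\<sigma>b @ [1]) * G n x ((a+c-1) # \<tau>) \<tau>b
       - G n x [c] [] * G n x ((\<sigma> @ [a+1]) @ (a+a+c-1) # \<tau>) ((\<sigma>b @ [1]) @ \<tau>b)"
    by (rule G_PE) (use ls a gy in auto)
  have r1: "G n x (\<sigma> @ (a+c) # (a+c) # (a # \<tau>)) (\<sigma>b @ (a+c) # (1 # \<tau>b))
     = G n x (\<sigma> @ [a+c]) \<sigma>b * G n x ((a+c) # a # \<tau>) (1 # \<tau>b) - G n x [a+c-1] [] * G n x (\<sigma> @ (a+c+1) # a # \<tau>) (\<sigma>b @ 1 # \<tau>b)"
    by (rule G_PE) (use ls gs a in auto)
  have r2: "G n x (\<sigma> @ (a+c+1) # (a+a+c-1) # \<tau>) (\<sigma>b @ (a+c) # \<tau>b)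
     = G n x (\<sigma> @ [a+c+1]) \<sigma>b * G n x ((a+a+c-1) # \<tau>) \<tau>b - G n x [a+c-1] [] * G n x (\<sigma> @ (a+a+c+1) # \<tau>) (\<sigma>b @ \<tau>b)"
    by (rule G_PE) (use ls gs a gy in auto)
  have r3: "G n x (\<sigma> @ (a+a+c) # (a+c) # \<tau>) (\<sigma>b @ (a+c) # \<tau>b)
     = G n x (\<sigma> @ [a+a+c]) \<sigma>b * G n x ((a+c) # \<tau>) \<tau>b - G n x [a+c-1] [] * G n x (\<sigma> @ (a+a+c+1) # \<tau>) (\<sigma>b @ \<tau>b)"
    by (rule G_PE) (use ls gs a gy in auto)
  have r4: "(if \<tau> = [] then 0 else G n x ((\<sigma> @ [a+1]) @ (a+c) # (a+c-1+hd \<tau>) # tl \<tau>) ((\<sigma>b @ [1]) @ (a+c) # tl \<tau>b))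
       = - G n x ((\<sigma> @ [a+1]) @ [a+c]) (\<sigma>b @ [1]) * G n x ((a+c-1) # \<tau>) \<tau>b
         + G n x [a+c-1] [] * G n x ((\<sigma> @ [a+1]) @ (a+c) # \<tau>) ((\<sigma>b @ [1]) @ \<tau>b)"
    by (rule G_T4) (use ls a lt t1 t2 in auto)
  have e1: "G n x ([] @ (a+c-1) # a # \<tau>) ([] @ 1 # \<tau>b)
     = G n x ([] @ [a+c-1]) [] * G n x (a # \<tau>) \<tau>b - G n x [0] [] * G n x ([] @ (a+a+c-1) # \<tau>) ([] @ \<tau>b)"
    by (rule G_PE) (use a gy in auto)
  have e2: "G n x (\<sigma> @ (a+1) # (a+c-1) # []) (\<sigma>b @ 1 # [])
     = G n x (\<sigma> @ [a+1]) \<sigma>b * G n x ((a+c-1) # []) [] - G n x [0] [] * G n x (\<sigma> @ (a+a+c) # []) (\<sigma>b @ [])"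
    by (rule G_PE) (use ls gs a in auto)
  have e3: "G n x (\<sigma> @ (a+c+1) # a # \<tau>) (\<sigma>b @ 1 # \<tau>b)
     = G n x (\<sigma> @ [a+c+1]) \<sigma>b * G n x (a # \<tau>) \<tau>b - G n x [0] [] * G n x (\<sigma> @ (a+a+c+1) # \<tau>) (\<sigma>b @ \<tau>b)"
    by (rule G_PE) (use ls gs a gy in auto)
  have e4: "G n x (\<sigma> @ (a+1) # (a+c) # \<tau>) (\<sigma>b @ 1 # \<tau>b)
     = G n x (\<sigma> @ [a+1]) \<sigma>b * G n x ((a+c) # \<tau>) \<tau>b - G n x [0] [] * G n x (\<sigma> @ (a+a+c+1) # \<tau>) (\<sigma>b @ \<tau>b)"
    by (rule G_PE) (use ls gs a gy in auto)
  note b3' = b3[unfolded LN] and b4' = b4[unfolded LN] and r4' = r4[unfolded LN]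
  note e1' = e1[unfolded G_H0 LN mult_1_left] and e2' = e2[unfolded G_H0 append_Nil2 mult_1_left]
  note e3' = e3[unfolded G_H0 mult_1_left] and e4' = e4[unfolded G_H0 mult_1_left]
  show ?thesis unfolding b1 b2 b3' b4' r1 r2 r3 r4' e1' e2' e3' e4' by (simp add: algebra_simps)
qed

lemma rep_mid: "replicate n x @ x # l = x # replicate n x @ l"
  by (induct n) auto

definition Lsum :: "nat \<Rightarrow> (nat \<Rightarrow> 'a::comm_ring_1) \<Rightarrow> nat list \<Rightarrow> nat list \<Rightarrow> nat \<Rightarrow> nat \<Rightarrow> nat \<Rightarrow> nat list \<Rightarrow> nat list \<Rightarrow> nat \<Rightarrow> 'a" where
  "Lsum n x \<sigma> \<sigma>b a c M \<tau> \<tau>b i =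
        G n x (\<sigma> @ [a+1] @ replicate (i-1) a @ [a+c-1, a+c] @ replicate (M-i) a @ \<tau>)
              (\<sigma>b @ replicate i 1 @ [c+1] @ replicate (M-i) 1 @ \<tau>b)
      - G n x (\<sigma> @ [a+1] @ replicate (i-1) a @ [a+c, a+c-1] @ replicate (M-i) a @ \<tau>)
              (\<sigma>b @ replicate i 1 @ [c+1] @ replicate (M-i) 1 @ \<tau>b)"

definition Rsum :: "nat \<Rightarrow> (nat \<Rightarrow> 'a::comm_ring_1) \<Rightarrow> nat list \<Rightarrow> nat list \<Rightarrow> nat \<Rightarrow> nat \<Rightarrow> nat \<Rightarrow> nat list \<Rightarrow> nat list \<Rightarrow> nat \<Rightarrow> 'a" where
  "Rsum n x \<sigma> \<sigma>b a c M \<tau> \<tau>b i =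
        G n x (\<sigma> @ [a+1] @ replicate (i-1) a @ [a+c, a+a+c-1] @ replicate (M-1-i) a @ \<tau>)
              (\<sigma>b @ replicate i 1 @ [a+c] @ replicate (M-i-1) 1 @ \<tau>b)
      - G n x (\<sigma> @ [a+1] @ replicate (i-1) a @ [a+a+c-1, a+c] @ replicate (M-1-i) a @ \<tau>)
              (\<sigma>b @ replicate i 1 @ [a+c] @ replicate (M-i-1) 1 @ \<tau>b)"

definition LHSg :: "nat \<Rightarrow> (nat \<Rightarrow> 'a::comm_ring_1) \<Rightarrow> nat list \<Rightarrow> nat list \<Rightarrow> nat \<Rightarrow> nat \<Rightarrow> nat \<Rightarrow> nat list \<Rightarrow> nat list \<Rightarrow> 'a" where
  "LHSg n x \<sigma> \<sigma>b a c M \<tau> \<tau>b =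
     G n x (\<sigma> @ [a+c, a+c] @ replicate M a @ \<tau>) (\<sigma>b @ [c+1] @ replicate M 1 @ \<tau>b)
   - G n x (\<sigma> @ [a+c+1, a+c-1] @ replicate M a @ \<tau>) (\<sigma>b @ [c+1] @ replicate M 1 @ \<tau>b)
   + (\<Sum>i=1..M. Lsum n x \<sigma> \<sigma>b a c M \<tau> \<tau>b i)"

definition R4 :: "nat \<Rightarrow> (nat \<Rightarrow> 'a::comm_ring_1) \<Rightarrow> nat list \<Rightarrow> nat list \<Rightarrow> nat \<Rightarrow> nat \<Rightarrow> nat \<Rightarrow> nat list \<Rightarrow> nat list \<Rightarrow> 'a" where
  "R4 n x \<sigma> \<sigma>b a c M \<tau> \<tau>b = (if \<tau> = [] then 0 else
        G n x (\<sigma> @ [a+1] @ replicate (M-1) a @ [a+c, a+c-1 + hd \<tau>] @ tl \<tau>)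
              (\<sigma>b @ replicate M 1 @ [a+c] @ tl \<tau>b))"

definition RHSg :: "nat \<Rightarrow> (nat \<Rightarrow> 'a::comm_ring_1) \<Rightarrow> nat list \<Rightarrow> nat list \<Rightarrow> nat \<Rightarrow> nat \<Rightarrow> nat \<Rightarrow> nat list \<Rightarrow> nat list \<Rightarrow> 'a" where
  "RHSg n x \<sigma> \<sigma>b a c M \<tau> \<tau>b =
     G n x (\<sigma> @ [a+c, a+c] @ replicate M a @ \<tau>) (\<sigma>b @ [a+c] @ replicate M 1 @ \<tau>b)
   + G n x (\<sigma> @ [a+c+1, a+a+c-1] @ replicate (M-1) a @ \<tau>) (\<sigma>b @ [a+c] @ replicate (M-1) 1 @ \<tau>b)
   - G n x (\<sigma> @ [a+a+c, a+c] @ replicate (M-1) a @ \<tau>) (\<sigma>b @ [a+c] @ replicate (M-1) 1 @ \<tau>b)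
   + R4 n x \<sigma> \<sigma>b a c M \<tau> \<tau>b
   + (\<Sum>i=1..M-1. Rsum n x \<sigma> \<sigma>b a c M \<tau> \<tau>b i)"

lemma G_base:
  fixes x :: "nat \<Rightarrow> 'a::comm_ring_1"
  assumes ls: "length \<sigma>b = length \<sigma>" and gs: "\<sigma> \<noteq> [] \<Longrightarrow> last \<sigma>b \<le> 1" and a: "2 \<le> a"
    and lt: "length \<tau>b = length \<tau>" and t1: "\<tau> \<noteq> [] \<Longrightarrow> hd \<tau>b = 1 \<and> 1 \<le> hd \<tau>"
    and t2: "2 \<le> length \<tau> \<Longrightarrow> \<tau>b!1 \<le> \<tau>!0"
  shows "LHSg n x \<sigma> \<sigma>b a c 1 \<tau> \<tau>b = RHSg n x \<sigma> \<sigma>b a c 1 \<tau> \<tau>b"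
  using G_Bstar[OF ls gs a lt t1 t2, of n x c] unfolding LHSg_def RHSg_def Lsum_def R4_def by simp

lemma Lsum_shift:
  assumes "i \<le> M"
  shows "Lsum n x \<sigma> \<sigma>b a c (Suc M) \<tau> \<tau>b i = Lsum n x \<sigma> \<sigma>b a c M (a#\<tau>) (1#\<tau>b) i"
  using assms unfolding Lsum_def by (simp add: Suc_diff_le rep_mid)

lemma Rsum_shift:
  assumes "i \<le> M - 1" "1 \<le> M"
  shows "Rsum n x \<sigma> \<sigma>b a c (Suc M) \<tau> \<tau>b i = Rsum n x \<sigma> \<sigma>b a c M (a#\<tau>) (1#\<tau>b) i"
proof -
  have e1: "Suc M - 1 - i = Suc (M - 1 - i)" using assms by simp
  have e2: "Suc M - i - 1 = Suc (M - i - 1)" using assms by simp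
  show ?thesis unfolding Rsum_def e1 e2 by (simp add: rep_mid)
qed

lemma G_step:
  fixes x :: "nat \<Rightarrow> 'a::comm_ring_1"
  assumes ls: "length \<sigma>b = length \<sigma>" and gs: "\<sigma> \<noteq> [] \<Longrightarrow> last \<sigma>b \<le> 1" and a: "2 \<le> a"
    and lt: "length \<tau>b = length \<tau>" and t1: "\<tau> \<noteq> [] \<Longrightarrow> hd \<tau>b = 1 \<and> 1 \<le> hd \<tau>"
    and t2: "2 \<le> length \<tau> \<Longrightarrow> \<tau>b!1 \<le> \<tau>!0"
    and IH: "LHSg n x \<sigma> \<sigma>b a c (Suc m) (a#\<tau>) (1#\<tau>b) = RHSg n x \<sigma> \<sigma>b a c (Suc m) (a#\<tau>) (1#\<tau>b)"
  shows "LHSg n x \<sigma> \<sigma>b a c (Suc (Suc m)) \<tau> \<tau>b = RHSg n x \<sigma> \<sigma>b a c (Suc (Suc m)) \<tau> \<tau>b"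
proof -
  define M where "M = Suc m"
  define X1 where "X1 = G n x (\<sigma> @ [a+1] @ replicate M a @ [a+c-1, a+c] @ \<tau>) (\<sigma>b @ replicate (Suc M) 1 @ [c+1] @ \<tau>b)"
  define X2 where "X2 = G n x (\<sigma> @ [a+1] @ replicate M a @ [a+c, a+c-1] @ \<tau>) (\<sigma>b @ replicate (Suc M) 1 @ [c+1] @ \<tau>b)"
  define Em where "Em = G n x (\<sigma> @ [a+1] @ replicate m a @ [a+a+c-1, a+c] @ \<tau>) (\<sigma>b @ replicate M 1 @ [a+c] @ \<tau>b)"
  define R4n where "R4n = R4 n x \<sigma> \<sigma>b a c (Suc M) \<tau> \<tau>b"
  have L1: "LHSg n x \<sigma> \<sigma>b a c (Suc M) \<tau> \<tau>b = LHSg n x \<sigma> \<sigma>b a c M (a#\<tau>) (1#\<tau>b) + (X1 - X2)"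
  proof -
    have s: "(\<Sum>i=1..Suc M. Lsum n x \<sigma> \<sigma>b a c (Suc M) \<tau> \<tau>b i)
        = (\<Sum>i=1..M. Lsum n x \<sigma> \<sigma>b a c M (a#\<tau>) (1#\<tau>b) i) + Lsum n x \<sigma> \<sigma>b a c (Suc M) \<tau> \<tau>b (Suc M)"
      by (simp add: sum.cl_ivl_Suc Lsum_shift)
    have l: "Lsum n x \<sigma> \<sigma>b a c (Suc M) \<tau> \<tau>b (Suc M) = X1 - X2"
      unfolding Lsum_def X1_def X2_def by simp
    show ?thesis unfolding LHSg_def s l by (simp add: rep_mid)
  qed
  have R1: "RHSg n x \<sigma> \<sigma>b a c (Suc M) \<tau> \<tau>b = RHSg n x \<sigma> \<sigma>b a c M (a#\<tau>) (1#\<tau>b) + R4n - Em"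
  proof -
    have s: "(\<Sum>i=1..Suc M - 1. Rsum n x \<sigma> \<sigma>b a c (Suc M) \<tau> \<tau>b i)
        = (\<Sum>i=1..M-1. Rsum n x \<sigma> \<sigma>b a c M (a#\<tau>) (1#\<tau>b) i) + Rsum n x \<sigma> \<sigma>b a c (Suc M) \<tau> \<tau>b M"
      unfolding M_def by (simp add: sum.cl_ivl_Suc Rsum_shift)
    have ar: "a + c - Suc 0 + a = a + a + c - Suc 0" using a by simp
    have r4: "R4 n x \<sigma> \<sigma>b a c M (a#\<tau>) (1#\<tau>b) = G n x (\<sigma> @ [a+1] @ replicate m a @ [a+c, a+a+c-1] @ \<tau>) (\<sigma>b @ replicate M 1 @ [a+c] @ \<tau>b)"
      unfolding R4_def M_def by (simp add: ar)
    have l: "Rsum n x \<sigma> \<sigma>b a c (Suc M) \<tau> \<tau>b M = G n x (\<sigma> @ [a+1] @ replicate m a @ [a+c, a+a+c-1] @ \<tau>) (\<sigma>b @ replicate M 1 @ [a+c] @ \<tau>b) - Em"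
      unfolding Rsum_def Em_def M_def by simp
    show ?thesis unfolding RHSg_def s l R4n_def r4 unfolding M_def by (simp add: rep_mid algebra_simps)
  qed
  have Ls: "X1 - X2 - R4n = - Em"
  proof -
    have lp': "length (\<sigma>b @ replicate M 1) = length (\<sigma> @ [a+1] @ replicate m a)" using ls unfolding M_def by simp
    have gp': "\<sigma> @ [a+1] @ replicate m a \<noteq> [] \<Longrightarrow> last (\<sigma>b @ replicate M 1) \<le> 1" unfolding M_def by simp
    show ?thesis
    using G_Lstar[OF lp' gp' a lt t1 t2, where c=c and n=n and x=x]
    unfolding X1_def X2_def R4n_def Em_def R4_def M_def by (cases "\<tau> = []") (simp_all add: rep_mid)
  qed
  have "X1 - X2 = R4n - Em" using Ls by (simp add: algebra_simps)
  hence "LHSg n x \<sigma> \<sigma>b a c (Suc M) \<tau> \<tau>b = RHSg n x \<sigma> \<sigma>b a c (Suc M) \<tau> \<tau>b"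
    unfolding L1 R1 using IH unfolding M_def by (simp add: algebra_simps)
  thus ?thesis unfolding M_def .
qed

lemma G_main:
  fixes x :: "nat \<Rightarrow> 'a::comm_ring_1"
  assumes ls: "length \<sigma>b = length \<sigma>" and gs: "\<sigma> \<noteq> [] \<Longrightarrow> last \<sigma>b \<le> 1" and a: "2 \<le> a"
  shows "length \<tau>b = length \<tau> \<Longrightarrow> (\<tau> \<noteq> [] \<Longrightarrow> hd \<tau>b = 1 \<and> 1 \<le> hd \<tau>) \<Longrightarrow>
    (2 \<le> length \<tau> \<Longrightarrow> \<tau>b!1 \<le> \<tau>!0) \<Longrightarrow>
    LHSg n x \<sigma> \<sigma>b a c (Suc m) \<tau> \<tau>b = RHSg n x \<sigma> \<sigma>b a c (Suc m) \<tau> \<tau>b"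
proof (induction m arbitrary: \<tau> \<tau>b)
  case 0
  then show ?case using G_base[OF ls gs a "0.prems"(1) "0.prems"(2) "0.prems"(3), of n x c] by simp
next
  case (Suc m)
  have IH: "LHSg n x \<sigma> \<sigma>b a c (Suc m) (a#\<tau>) (1#\<tau>b) = RHSg n x \<sigma> \<sigma>b a c (Suc m) (a#\<tau>) (1#\<tau>b)"
  proof (rule Suc.IH)
    show "length (1 # \<tau>b) = length (a # \<tau>)" using Suc.prems by simp
    show "a # \<tau> \<noteq> [] \<Longrightarrow> hd (1 # \<tau>b) = 1 \<and> 1 \<le> hd (a # \<tau>)" using a by simp
    show "2 \<le> length (a # \<tau>) \<Longrightarrow> (1 # \<tau>b) ! 1 \<le> (a # \<tau>) ! 0"
    proof -
      assume "2 \<le> length (a # \<tau>)"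
      hence "\<tau> \<noteq> []" by auto
      hence "hd \<tau>b = 1" using Suc.prems by simp
      moreover have "\<tau>b \<noteq> []" using \<open>\<tau> \<noteq> []\<close> Suc.prems by auto
      ultimately show ?thesis using a by (cases \<tau>b) auto
    qed
  qed
  show ?case by (rule G_step[OF ls gs a Suc.prems IH])
qed

definition valid :: "nat list \<Rightarrow> nat list \<Rightarrow> bool" where
  "valid \<alpha> \<beta> \<longleftrightarrow> length \<beta> + 1 = length \<alpha> \<and> (\<forall>i<length \<beta>. \<beta>!i \<le> \<alpha>!i \<and> \<beta>!i \<le> \<alpha>!(Suc i))"

lemma adjs_nth:
  "length bs + 1 = length ws \<Longrightarrow> adjs bs ws \<longleftrightarrow> (\<forall>i<length bs. adjl (bs!i) (ws!i) (ws!(Suc i)))"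
proof (induction ws arbitrary: bs)
  case Nil then show ?case by simp
next
  case (Cons w ws)
  show ?case
  proof (cases bs)
    case Nil then show ?thesis by (cases ws) auto
  next
    case (Cons b bs')
    then obtain v ws' where ws: "ws = v # ws'" using Cons.prems by (cases ws) auto
    have IH: "adjs bs' ws \<longleftrightarrow> (\<forall>i<length bs'. adjl (bs'!i) (ws!i) (ws!(Suc i)))"
      using Cons.IH Cons.prems \<open>bs = b # bs'\<close> by simp
    show ?thesis using IH \<open>bs = b # bs'\<close> ws by (auto simp: less_Suc_eq_0_disj)
  qed
qed

lemma prod_list_upt0: "prod_list (map h [0..<k]) = (\<Prod>j<k. h j)"
  by (induct k) (auto simp: lessThan_Suc mult.commute)

lemma prod_list_concat_map: "prod_list (map x (concat xss)) = prod_list (map (\<lambda>xs. prod_list (map x xs)) xss)"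
  by (induct xss) auto

context
  fixes \<alpha> \<beta> :: "nat list"
  assumes V: "valid \<alpha> \<beta>"
begin

abbreviation "L \<equiv> length \<alpha>"
abbreviation "mu \<equiv> ov_mu \<alpha> \<beta>"

lemma lenb: "length \<beta> = L - 1" "L \<ge> 1" using V unfolding valid_def by auto

lemma mu_step: "Suc i < L \<Longrightarrow> mu i = mu (Suc i) + int (\<alpha>!(Suc i)) - int (\<beta>!i)"
proof -
  assume h: "Suc i < L"
  have s1: "(\<Sum>j\<in>{Suc i..<L}. int (\<alpha>!j)) = int (\<alpha>!(Suc i)) + (\<Sum>j\<in>{Suc (Suc i)..<L}. int (\<alpha>!j))"
    using h by (simp add: sum.atLeast_Suc_lessThan)
  have s2: "(\<Sum>j\<in>{i..<L-1}. int (\<beta>!j)) = int (\<beta>!i) + (\<Sum>j\<in>{Suc i..<L-1}. int (\<beta>!j))"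
    using h by (simp add: sum.atLeast_Suc_lessThan)
  show ?thesis unfolding ov_mu_def s1 s2 by simp
qed

lemma bnd: "i < length \<beta> \<Longrightarrow> \<beta>!i \<le> \<alpha>!i \<and> \<beta>!i \<le> \<alpha>!(Suc i)"
  using V unfolding valid_def by auto

lemma mu_mono1: "Suc i < L \<Longrightarrow> mu (Suc i) \<le> mu i"
  using mu_step bnd[of i] lenb by force

lemma lam_mono1: "Suc i < L \<Longrightarrow> mu (Suc i) + int (\<alpha>!(Suc i)) \<le> mu i + int (\<alpha>!i)"
  using mu_step bnd[of i] lenb by force

lemma mu_mono: "i \<le> i' \<Longrightarrow> i' < L \<Longrightarrow> mu i' \<le> mu i"
proof (induction i' rule: dec_induct)
  case base then show ?case by simp
next
  case (step k) then show ?case using mu_mono1[of k] by simp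
qed

lemma lam_mono: "i \<le> i' \<Longrightarrow> i' < L \<Longrightarrow> mu i' + int (\<alpha>!i') \<le> mu i + int (\<alpha>!i)"
proof (induction i' rule: dec_induct)
  case base then show ?case by simp
next
  case (step k) then show ?case using lam_mono1[of k] by simp
qed

lemma cellsD: "(i, c) \<in> ov_cells \<alpha> \<beta> \<longleftrightarrow> i < L \<and> mu i \<le> c \<and> c < mu i + int (\<alpha>!i)"
  unfolding ov_cells_def ov_lam_def by auto

definition toW :: "(nat \<times> int \<Rightarrow> nat) \<Rightarrow> nat list list" where
  "toW T = map (\<lambda>i. map (\<lambda>j. T (i, mu i + int j)) [0..<\<alpha>!i]) [0..<L]"

definition fromW :: "nat list list \<Rightarrow> nat \<times> int \<Rightarrow> nat" where
  "fromW ws = (\<lambda>(i, c). if (i, c) \<in> ov_cells \<alpha> \<beta> then ws!i!nat (c - mu i) else undefined)"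

lemma between: "i < k \<Longrightarrow> k < i' \<Longrightarrow> (i, c) \<in> ov_cells \<alpha> \<beta> \<Longrightarrow> (i', c) \<in> ov_cells \<alpha> \<beta> \<Longrightarrow> (k, c) \<in> ov_cells \<alpha> \<beta>"
  using mu_mono[of i k] lam_mono[of k i'] unfolding cellsD by force

lemma adj_cells: "Suc i < L \<Longrightarrow> (i, c) \<in> ov_cells \<alpha> \<beta> \<Longrightarrow> (Suc i, c) \<in> ov_cells \<alpha> \<beta> \<Longrightarrow>
   nat (c - mu i) < \<beta>!i \<and> nat (c - mu (Suc i)) = \<alpha>!(Suc i) - \<beta>!i + nat (c - mu i)"
  using mu_step[of i] bnd[of i] lenb unfolding cellsD by auto

lemma toW_RT:
  assumes T: "T \<in> ssyt n (ov_cells \<alpha> \<beta>)"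
  shows "toW T \<in> RT n \<alpha> \<beta>"
proof -
  have Tpi: "T \<in> ov_cells \<alpha> \<beta> \<rightarrow>\<^sub>E {..<n}" and
    rw: "\<And>i j j'. (i, j) \<in> ov_cells \<alpha> \<beta> \<Longrightarrow> (i, j') \<in> ov_cells \<alpha> \<beta> \<Longrightarrow> j \<le> j' \<Longrightarrow> T (i, j) \<le> T (i, j')" and
    cs: "\<And>i i' j. (i, j) \<in> ov_cells \<alpha> \<beta> \<Longrightarrow> (i', j) \<in> ov_cells \<alpha> \<beta> \<Longrightarrow> i < i' \<Longrightarrow> T (i, j) < T (i', j)"
    using T unfolding ssyt_def by auto
  have ml: "map length (toW T) = \<alpha>" unfolding toW_def by (simp add: comp_def map_nth)
  have gw: "\<forall>w\<in>set (toW T). goodw n w"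
  proof
    fix w assume "w \<in> set (toW T)"
    then obtain i where i: "i < L" "w = map (\<lambda>j. T (i, mu i + int j)) [0..<\<alpha>!i]" unfolding toW_def by auto
    have inD: "j < \<alpha>!i \<Longrightarrow> (i, mu i + int j) \<in> ov_cells \<alpha> \<beta>" for j using i unfolding cellsD by simp
    have "sorted w" unfolding i(2) sorted_iff_nth_mono
      by (auto intro!: rw inD)
    moreover have "set w \<subseteq> {..<n}" unfolding i(2) using Tpi inD by (auto simp: PiE_def Pi_def)
    ultimately show "goodw n w" unfolding goodw_def by simp
  qed
  have lt: "length \<beta> + 1 = length (toW T)" using lenb unfolding toW_def by simp
  have ad: "adjs \<beta> (toW T)"
    unfolding adjs_nth[OF lt]
  proof (intro allI impI)
    fix i assume i: "i < length \<beta>"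
    have si: "Suc i < L" using i lenb by simp
    show "adjl (\<beta>!i) (toW T ! i) (toW T ! Suc i)"
      unfolding adjl_def
    proof (intro allI impI)
      fix j assume j: "j < \<beta>!i"
      have c1: "(i, mu i + int j) \<in> ov_cells \<alpha> \<beta>" using si j bnd[OF i] unfolding cellsD by simp
      have c2: "(Suc i, mu i + int j) \<in> ov_cells \<alpha> \<beta>"
        using si j bnd[OF i] mu_step[OF si] unfolding cellsD by simp
      have e: "mu (Suc i) + int (\<alpha>!(Suc i) - \<beta>!i + j) = mu i + int j"
        using mu_step[OF si] bnd[OF i] by simp
      have e': "mu (Suc i) + (int (\<alpha>!Suc i) + int j - int (\<beta>!i)) = mu i + int j"
        using mu_step[OF si] by simp
      have lt2: "\<alpha>!(Suc i) - \<beta>!i + j < \<alpha>!(Suc i)" using j bnd[OF i] by arith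
      show "toW T ! i ! j < toW T ! Suc i ! (length (toW T ! Suc i) - \<beta>!i + j)"
      proof -
        define k where "k = \<alpha>!(Suc i) - \<beta>!i + j"
        have idx: "length (toW T ! Suc i) - \<beta>!i + j = k" unfolding k_def toW_def using si by simp
        have kl: "k < \<alpha>!(Suc i)" unfolding k_def by (rule lt2)
        have v2: "toW T ! Suc i ! k = T (Suc i, mu (Suc i) + int k)" using si kl unfolding toW_def by simp
        have ck: "mu (Suc i) + int k = mu i + int j"
          using mu_step[OF si] bnd[OF i] unfolding k_def by (simp add: of_nat_diff)
        have v1: "toW T ! i ! j = T (i, mu i + int j)" using si j bnd[OF i] unfolding toW_def by simp
        show ?thesis unfolding idx v2 ck v1 using cs[OF c1 c2] by simp
      qed
    qed
  qed
  show ?thesis unfolding RT_def using ml gw ad by simp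
qed

lemma RT_props:
  assumes "ws \<in> RT n \<alpha> \<beta>"
  shows "length ws = L" "\<And>i. i < L \<Longrightarrow> length (ws!i) = \<alpha>!i" "\<And>i. i < L \<Longrightarrow> goodw n (ws!i)"
    "\<And>i. i < length \<beta> \<Longrightarrow> adjl (\<beta>!i) (ws!i) (ws!(Suc i))"
proof -
  have ml: "map length ws = \<alpha>" and g: "\<forall>w\<in>set ws. goodw n w" and ad: "adjs \<beta> ws"
    using assms unfolding RT_def by auto
  show l: "length ws = L" using ml by (metis length_map)
  show "\<And>i. i < L \<Longrightarrow> length (ws!i) = \<alpha>!i" using ml l by (metis nth_map)
  show "\<And>i. i < L \<Longrightarrow> goodw n (ws!i)" using g l by simp
  have lt: "length \<beta> + 1 = length ws" using l lenb by simp
  show "\<And>i. i < length \<beta> \<Longrightarrow> adjl (\<beta>!i) (ws!i) (ws!(Suc i))" using ad unfolding adjs_nth[OF lt] by blast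
qed

lemma adjacent:
  assumes ws: "ws \<in> RT n \<alpha> \<beta>" and si: "Suc i < L" and c1: "(i, c) \<in> ov_cells \<alpha> \<beta>" and c2: "(Suc i, c) \<in> ov_cells \<alpha> \<beta>"
  shows "ws!i!nat (c - mu i) < ws!(Suc i)!nat (c - mu (Suc i))"
proof -
  have ib: "i < length \<beta>" using si lenb by simp
  note A = adj_cells[OF si c1 c2]
  have "ws!i!nat (c - mu i) < ws!(Suc i)!(length (ws!(Suc i)) - \<beta>!i + nat (c - mu i))"
    using RT_props(4)[OF ws ib] A unfolding adjl_def by blast
  thus ?thesis using A RT_props(2)[OF ws si] by simp
qed

lemma colstrict:
  assumes ws: "ws \<in> RT n \<alpha> \<beta>"
  shows "(i, c) \<in> ov_cells \<alpha> \<beta> \<Longrightarrow> (i + Suc d, c) \<in> ov_cells \<alpha> \<beta> \<Longrightarrow>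
     ws!i!nat (c - mu i) < ws!(i + Suc d)!nat (c - mu (i + Suc d))"
proof (induction d)
  case 0
  have "Suc i < L" using 0 unfolding cellsD by simp
  then show ?case using adjacent[OF ws _ 0(1)] 0(2) by simp
next
  case (Suc d)
  have m: "(i + Suc d, c) \<in> ov_cells \<alpha> \<beta>" by (rule between[OF _ _ Suc.prems(1) Suc.prems(2)]) auto
  have l: "Suc (i + Suc d) < L" using Suc.prems(2) unfolding cellsD by simp
  have "ws!(i + Suc d)!nat (c - mu (i + Suc d)) < ws!(Suc (i + Suc d))!nat (c - mu (Suc (i + Suc d)))"
    using adjacent[OF ws l m] Suc.prems(2) by simp
  then show ?case using Suc.IH[OF Suc.prems(1) m] by simp
qed

lemma fromW_ssyt:
  assumes ws: "ws \<in> RT n \<alpha> \<beta>"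
  shows "fromW ws \<in> ssyt n (ov_cells \<alpha> \<beta>)"
proof -
  have val: "(i, c) \<in> ov_cells \<alpha> \<beta> \<Longrightarrow> fromW ws (i, c) = ws!i!nat (c - mu i)" for i c
    unfolding fromW_def by simp
  have idx: "(i, c) \<in> ov_cells \<alpha> \<beta> \<Longrightarrow> i < L \<and> nat (c - mu i) < length (ws!i)" for i c
    using RT_props(2)[OF ws] unfolding cellsD by auto
  have pi: "fromW ws \<in> ov_cells \<alpha> \<beta> \<rightarrow>\<^sub>E {..<n}"
  proof
    fix p assume p: "p \<in> ov_cells \<alpha> \<beta>"
    obtain i c where pc: "p = (i, c)" by (cases p)
    have "ws!i!nat (c - mu i) \<in> set (ws!i)" using idx[OF p[unfolded pc]] by simp
    moreover have "set (ws!i) \<subseteq> {..<n}" using RT_props(3)[OF ws] idx[OF p[unfolded pc]] unfolding goodw_def by simp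
    ultimately show "fromW ws p \<in> {..<n}" using val p pc by auto
  next
    fix p assume "p \<notin> ov_cells \<alpha> \<beta>"
    thus "fromW ws p = undefined" unfolding fromW_def by (cases p) auto
  qed
  have rw: "fromW ws (i, j) \<le> fromW ws (i, j')" if t1: "(i, j) \<in> ov_cells \<alpha> \<beta>" and t2: "(i, j') \<in> ov_cells \<alpha> \<beta>" and t3: "j \<le> j'" for i j j'
  proof -
    have s: "sorted (ws!i)" using RT_props(3)[OF ws] idx[OF t1] unfolding goodw_def by simp
    have "nat (j - mu i) \<le> nat (j' - mu i)" using t3 by simp
    thus ?thesis using val[OF t1] val[OF t2] sorted_nth_mono[OF s] idx[OF t2] by simp
  qed
  have cs: "fromW ws (i, j) < fromW ws (i', j)" if t1: "(i, j) \<in> ov_cells \<alpha> \<beta>" and t2: "(i', j) \<in> ov_cells \<alpha> \<beta>" and t3: "i < i'" for i i' j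
  proof -
    obtain d where d: "i' = i + Suc d" using t3 less_iff_Suc_add by auto
    show ?thesis using colstrict[OF ws t1, of d] t2 val[OF t1] val[OF t2] d by simp
  qed
  show ?thesis unfolding ssyt_def using pi rw cs by blast
qed

lemma fromW_toW:
  assumes T: "T \<in> ssyt n (ov_cells \<alpha> \<beta>)"
  shows "fromW (toW T) = T"
proof (rule ext)
  fix p :: "nat \<times> int"
  obtain i c where pc: "p = (i, c)" by (cases p)
  have ext: "T \<in> ov_cells \<alpha> \<beta> \<rightarrow>\<^sub>E {..<n}" using T unfolding ssyt_def by auto
  show "fromW (toW T) p = T p"
  proof (cases "p \<in> ov_cells \<alpha> \<beta>")
    case True
    hence h: "i < L" "mu i \<le> c" "c < mu i + int (\<alpha>!i)" using pc cellsD[of i c] by auto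
    have "nat (c - mu i) < \<alpha>!i" using h by simp
    hence "toW T ! i ! nat (c - mu i) = T (i, mu i + int (nat (c - mu i)))" using h unfolding toW_def by simp
    also have "\<dots> = T (i, c)" using h by simp
    finally show ?thesis using True pc unfolding fromW_def by simp
  next
    case False
    then show ?thesis using ext unfolding fromW_def pc by (auto simp: PiE_def extensional_def)
  qed
qed

lemma toW_fromW:
  assumes ws: "ws \<in> RT n \<alpha> \<beta>"
  shows "toW (fromW ws) = ws"
proof (rule nth_equalityI)
  show "length (toW (fromW ws)) = length ws" using RT_props(1)[OF ws] unfolding toW_def by simp
  fix i assume "i < length (toW (fromW ws))"
  hence i: "i < L" unfolding toW_def by simp
  show "toW (fromW ws) ! i = ws ! i"
  proof (rule nth_equalityI)
    show "length (toW (fromW ws) ! i) = length (ws ! i)" using i RT_props(2)[OF ws i] unfolding toW_def by simp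
    fix j assume "j < length (toW (fromW ws) ! i)"
    hence j: "j < \<alpha>!i" using i unfolding toW_def by simp
    have "(i, mu i + int j) \<in> ov_cells \<alpha> \<beta>" using i j unfolding cellsD by simp
    thus "toW (fromW ws) ! i ! j = ws ! i ! j" using i j unfolding toW_def fromW_def by simp
  qed
qed

lemma wt_toW:
  "wt x (toW T) = (\<Prod>c\<in>ov_cells \<alpha> \<beta>. x (T c))"
proof -
  define S where "S = (SIGMA i:{..<L}. {..<\<alpha>!i})"
  define f where "f = (\<lambda>(i::nat, j::nat). (i, mu i + int j))"
  have inj: "inj_on f S" unfolding f_def S_def inj_on_def by auto
  have img: "f ` S = ov_cells \<alpha> \<beta>"
  proof
    show "f ` S \<subseteq> ov_cells \<alpha> \<beta>" unfolding f_def S_def by (auto simp: cellsD)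
    show "ov_cells \<alpha> \<beta> \<subseteq> f ` S"
    proof
      fix p assume p: "p \<in> ov_cells \<alpha> \<beta>"
      obtain i c where pc: "p = (i, c)" by (cases p)
      have h: "i < L" "mu i \<le> c" "c < mu i + int (\<alpha>!i)" using p pc cellsD[of i c] by auto
      have "(i, nat (c - mu i)) \<in> S" using h unfolding S_def by simp
      moreover have "f (i, nat (c - mu i)) = p" using h pc unfolding f_def by simp
      ultimately show "p \<in> f ` S" by force
    qed
  qed
  have "(\<Prod>c\<in>ov_cells \<alpha> \<beta>. x (T c)) = (\<Prod>p\<in>S. x (T (f p)))"
    unfolding img[symmetric] by (rule prod.reindex[OF inj, unfolded comp_def])
  also have "\<dots> = (\<Prod>i<L. \<Prod>j<\<alpha>!i. x (T (i, mu i + int j)))"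
    unfolding S_def f_def by (simp add: prod.Sigma case_prod_beta)
  also have "\<dots> = wt x (toW T)"
    unfolding wt_def toW_def prod_list_concat_map by (simp add: comp_def prod_list_upt0)
  finally show ?thesis by simp
qed

lemma ov_schur_G: "ov_schur n x \<alpha> \<beta> = G n x \<alpha> \<beta>"
  unfolding ov_schur_def G_def
proof (rule sum.reindex_bij_witness[where i=fromW and j=toW])
  fix T assume "T \<in> ssyt n (ov_cells \<alpha> \<beta>)"
  thus "fromW (toW T) = T" "toW T \<in> RT n \<alpha> \<beta>" "wt x (toW T) = (\<Prod>c\<in>ov_cells \<alpha> \<beta>. x (T c))"
    using fromW_toW toW_RT wt_toW by auto
next
  fix ws assume "ws \<in> RT n \<alpha> \<beta>"
  thus "toW (fromW ws) = ws" "fromW ws \<in> ssyt n (ov_cells \<alpha> \<beta>)" using toW_fromW fromW_ssyt by auto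
qed

end

fun vr :: "nat list \<Rightarrow> nat list \<Rightarrow> bool" where
  "vr [] bs = False"
| "vr [p] bs = (bs = [])"
| "vr (p # q # ps) bs = (case bs of [] \<Rightarrow> False | b # bs' \<Rightarrow> b \<le> p \<and> b \<le> q \<and> vr (q # ps) bs')"

lemma vr_valid: "vr \<alpha> \<beta> \<Longrightarrow> valid \<alpha> \<beta>"
proof (induction \<alpha> \<beta> rule: vr.induct)
  case (1 bs) then show ?case by simp
next
  case (2 p bs) then show ?case by (simp add: valid_def)
next
  case (3 p q ps bs)
  then obtain b bs' where bs: "bs = b # bs'" by (cases bs) auto
  have h: "b \<le> p" "b \<le> q" "vr (q # ps) bs'" using 3(2) bs by auto
  have v: "valid (q # ps) bs'" using 3(1)[OF bs h(3)] .
  have L: "length bs' + 1 = length (q # ps)" and B: "\<forall>i<length bs'. bs'!i \<le> (q # ps)!i \<and> bs'!i \<le> (q # ps)!Suc i"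
    using v unfolding valid_def by auto
  show ?case unfolding valid_def bs
  proof (rule conjI)
    show "length (b # bs') + 1 = length (p # q # ps)" using L by simp
    show "\<forall>i<length (b # bs'). (b # bs') ! i \<le> (p # q # ps) ! i \<and> (b # bs') ! i \<le> (p # q # ps) ! Suc i"
    proof (intro allI impI)
      fix i assume i: "i < length (b # bs')"
      show "(b # bs') ! i \<le> (p # q # ps) ! i \<and> (b # bs') ! i \<le> (p # q # ps) ! Suc i"
        using h B i by (cases i) auto
    qed
  qed
qed

lemma valid_vr: "valid \<alpha> \<beta> \<Longrightarrow> vr \<alpha> \<beta>"
proof (induction \<alpha> \<beta> rule: vr.induct)
  case (1 bs) then show ?case by (simp add: valid_def)
next
  case (2 p bs) then show ?case by (simp add: valid_def)
next
  case (3 p q ps bs)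
  then obtain b bs' where bs: "bs = b # bs'" unfolding valid_def by (cases bs) auto
  have v: "valid (q # ps) bs'" using 3(2) bs unfolding valid_def by force
  have "b \<le> p" "b \<le> q" using 3(2) bs unfolding valid_def by force+
  then show ?case using 3(1)[OF bs v] bs by simp
qed

lemma vr_app: "A \<noteq> [] \<Longrightarrow> vr A Ab \<Longrightarrow> vr B Bb \<Longrightarrow> B \<noteq> [] \<Longrightarrow> g \<le> last A \<Longrightarrow> g \<le> hd B \<Longrightarrow> vr (A @ B) (Ab @ g # Bb)"
proof (induction A arbitrary: Ab)
  case Nil then show ?case by simp
next
  case (Cons p A)
  show ?case
  proof (cases A)
    case Nil
    then have "Ab = []" using Cons.prems by simp
    then show ?thesis using Nil Cons.prems by (cases B) auto
  next
    case (Cons q A')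
    then obtain b Ab' where ab: "Ab = b # Ab'" using Cons.prems(2) by (cases Ab) auto
    have h: "b \<le> p" "b \<le> q" "vr A Ab'" using Cons.prems(2) ab \<open>A = q # A'\<close> by auto
    have "vr (A @ B) (Ab' @ g # Bb)" using Cons.IH[OF _ h(3)] Cons.prems \<open>A = q # A'\<close> by simp
    then show ?thesis using h ab \<open>A = q # A'\<close> by simp
  qed
qed

lemma vr_mono_hd: "vr (y # l) lb \<Longrightarrow> y \<le> y' \<Longrightarrow> vr (y' # l) lb"
  by (cases l) (auto split: list.splits)

lemma vr_rep: "1 \<le> a \<Longrightarrow> 1 \<le> x \<Longrightarrow> vr (x # replicate m a @ l) (replicate m 1 @ lb) = vr ((if m = 0 then x else a) # l) lb"
proof (induction m arbitrary: x)
  case 0 then show ?case by simp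
next
  case (Suc m) then show ?case by simp
qed

lemma std_sigma:
  assumes S: "standing_hyp \<sigma> \<tau> \<sigma>b \<tau>b" and W: "W \<noteq> []" "1 \<le> hd W" "vr W Wb"
  shows "vr (\<sigma> @ W) (\<sigma>b @ Wb)"
proof (cases "\<sigma> = []")
  case True
  then have "\<sigma>b = []" using S unfolding standing_hyp_def by simp
  then show ?thesis using True W by simp
next
  case False
  have ls: "length \<sigma>b = length \<sigma>" and l1: "last \<sigma>b = 1" and pos: "\<forall>i<length \<sigma>. 1 \<le> \<sigma>!i"
    and ov: "\<forall>i. i + 1 < length \<sigma> \<longrightarrow> \<sigma>b!i \<le> min (\<sigma>!i) (\<sigma>!(i+1))"
    using S False unfolding standing_hyp_def by auto
  have sbne: "\<sigma>b \<noteq> []" using ls False by auto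
  have v: "valid \<sigma> (butlast \<sigma>b)" unfolding valid_def
  proof (rule conjI)
    show "length (butlast \<sigma>b) + 1 = length \<sigma>" using ls False by simp
    show "\<forall>i<length (butlast \<sigma>b). butlast \<sigma>b ! i \<le> \<sigma> ! i \<and> butlast \<sigma>b ! i \<le> \<sigma> ! Suc i"
    proof (intro allI impI)
      fix i assume i: "i < length (butlast \<sigma>b)"
      have "\<sigma>b!i \<le> min (\<sigma>!i) (\<sigma>!(i+1))" using ov i ls by simp
      then show "butlast \<sigma>b ! i \<le> \<sigma> ! i \<and> butlast \<sigma>b ! i \<le> \<sigma> ! Suc i" using i by (simp add: nth_butlast)
    qed
  qed
  have lastpos: "1 \<le> last \<sigma>" using pos False by (simp add: last_conv_nth)
  have e: "\<sigma>b = butlast \<sigma>b @ [1]" using sbne l1 by (metis append_butlast_last_id)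
  have "vr (\<sigma> @ W) (butlast \<sigma>b @ 1 # Wb)"
    by (rule vr_app[OF False valid_vr[OF v] W(3) W(1) lastpos W(2)])
  then show ?thesis by (subst e) simp
qed

lemma std_tau:
  assumes S: "standing_hyp \<sigma> \<tau> \<sigma>b \<tau>b" and y: "1 \<le> y"
  shows "vr (y # \<tau>) \<tau>b"
proof (cases "\<tau> = []")
  case True
  then have "\<tau>b = []" using S unfolding standing_hyp_def by simp
  then show ?thesis using True by simp
next
  case False
  have lt: "length \<tau>b = length \<tau>" and h1: "hd \<tau>b = 1" and pos: "\<forall>i<length \<tau>. 1 \<le> \<tau>!i"
    and ov: "\<forall>i. 1 \<le> i \<and> i < length \<tau> \<longrightarrow> \<tau>b!i \<le> min (\<tau>!i) (\<tau>!(i-1))"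
    using S False unfolding standing_hyp_def by auto
  have v: "valid \<tau> (tl \<tau>b)" unfolding valid_def
  proof (rule conjI)
    show "length (tl \<tau>b) + 1 = length \<tau>" using lt False by simp
    show "\<forall>i<length (tl \<tau>b). tl \<tau>b ! i \<le> \<tau> ! i \<and> tl \<tau>b ! i \<le> \<tau> ! Suc i"
    proof (intro allI impI)
      fix i assume i: "i < length (tl \<tau>b)"
      have "\<tau>b!(Suc i) \<le> min (\<tau>!(Suc i)) (\<tau>!i)" using ov[rule_format, of "Suc i"] i lt by simp
      then show "tl \<tau>b ! i \<le> \<tau> ! i \<and> tl \<tau>b ! i \<le> \<tau> ! Suc i" using i by (simp add: nth_tl)
    qed
  qed
  obtain t \<tau>' where t: "\<tau> = t # \<tau>'" using False by (cases \<tau>) auto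
  obtain \<tau>b' where tb: "\<tau>b = 1 # \<tau>b'" using lt h1 False by (cases \<tau>b) auto
  have "1 \<le> t" using pos t by auto
  then show ?thesis using valid_vr[OF v] y t tb by simp
qed

lemma vcore:
  assumes S: "standing_hyp \<sigma> \<tau> \<sigma>b \<tau>b" and a: "1 \<le> a" and "r \<le> p" "r \<le> q" "1 \<le> q"
  shows "vr (p # q # replicate m a @ \<tau>) (r # replicate m 1 @ \<tau>b)"
proof -
  have "vr ((if m = 0 then q else a) # \<tau>) \<tau>b" by (rule std_tau[OF S]) (use a assms in auto)
  hence "vr (q # replicate m a @ \<tau>) (replicate m 1 @ \<tau>b)" using vr_rep[OF a \<open>1 \<le> q\<close>] by simp
  thus ?thesis using assms by simp
qed

lemma VL:
  assumes S: "standing_hyp \<sigma> \<tau> \<sigma>b \<tau>b" and a: "1 \<le> a" and "r \<le> p" "r \<le> q" "1 \<le> p" "1 \<le> q"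
  shows "valid (\<sigma> @ [p, q] @ replicate m a @ \<tau>) (\<sigma>b @ [r] @ replicate m 1 @ \<tau>b)"
proof -
  have "vr (\<sigma> @ (p # q # replicate m a @ \<tau>)) (\<sigma>b @ (r # replicate m 1 @ \<tau>b))"
    by (rule std_sigma[OF S]) (use vcore[OF S a assms(3-4,6)] assms in auto)
  thus ?thesis using vr_valid by simp
qed

lemma VS:
  assumes S: "standing_hyp \<sigma> \<tau> \<sigma>b \<tau>b" and a: "1 \<le> a" and "r \<le> p" "r \<le> q" "1 \<le> p" "1 \<le> q" and i: "1 \<le> i"
  shows "valid (\<sigma> @ [a+1] @ replicate (i-1) a @ [p, q] @ replicate m a @ \<tau>) (\<sigma>b @ replicate i 1 @ [r] @ replicate m 1 @ \<tau>b)"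
proof -
  obtain j where j: "i = Suc j" using i by (cases i) auto
  have c: "vr (p # q # replicate m a @ \<tau>) (r # replicate m 1 @ \<tau>b)" by (rule vcore[OF S a assms(3-4,6)])
  have "vr ((if j = 0 then a+1 else a) # p # q # replicate m a @ \<tau>) (1 # r # replicate m 1 @ \<tau>b)"
    using c assms by simp
  hence w: "vr ((a+1) # replicate j a @ p # q # replicate m a @ \<tau>) (replicate j 1 @ 1 # r # replicate m 1 @ \<tau>b)"
    using vr_rep[of a "a+1" j] a by simp
  have "vr (\<sigma> @ ((a+1) # replicate j a @ p # q # replicate m a @ \<tau>)) (\<sigma>b @ (replicate j 1 @ 1 # r # replicate m 1 @ \<tau>b))"
    by (rule std_sigma[OF S _ _ w]) auto
  hence "vr (\<sigma> @ [a+1] @ replicate (i-1) a @ [p, q] @ replicate m a @ \<tau>) (\<sigma>b @ replicate i 1 @ [r] @ replicate m 1 @ \<tau>b)"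
    unfolding j by (simp add: rep_mid)
  thus ?thesis by (rule vr_valid)
qed

lemma V4:
  assumes S: "standing_hyp \<sigma> \<tau> \<sigma>b \<tau>b" and a: "1 \<le> a" and t: "\<tau> \<noteq> []" and K: "1 \<le> K" and M: "1 \<le> M"
  shows "valid (\<sigma> @ [a+1] @ replicate (M-1) a @ [K, K-1 + hd \<tau>] @ tl \<tau>) (\<sigma>b @ replicate M 1 @ [K] @ tl \<tau>b)"
proof -
  obtain m where m: "M = Suc m" using M by (cases M) auto
  obtain t1 \<tau>' where tt: "\<tau> = t1 # \<tau>'" using t by (cases \<tau>) auto
  have lt: "length \<tau>b = length \<tau>" and h1: "hd \<tau>b = 1" using S t unfolding standing_hyp_def by auto
  obtain \<tau>b' where tb: "\<tau>b = 1 # \<tau>b'" using lt h1 tt by (cases \<tau>b) auto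
  have "vr (1 # \<tau>) \<tau>b" by (rule std_tau[OF S]) simp
  hence v0: "vr (t1 # \<tau>') \<tau>b'" and t1p: "1 \<le> t1" using tt tb by auto
  define y where "y = K - 1 + t1"
  have yK: "K \<le> y" using t1p K unfolding y_def by simp
  have v1: "vr (y # \<tau>') \<tau>b'" by (rule vr_mono_hd[OF v0]) (use K t1p in \<open>simp add: y_def\<close>)
  have c: "vr (K # y # \<tau>') (K # \<tau>b')" using v1 K yK by simp
  have "vr ((if m = 0 then a+1 else a) # K # y # \<tau>') (1 # K # \<tau>b')" using c K a by simp
  hence w: "vr ((a+1) # replicate m a @ K # y # \<tau>') (replicate m 1 @ 1 # K # \<tau>b')"
    using vr_rep[of a "a+1" m] a by simp
  have "vr (\<sigma> @ ((a+1) # replicate m a @ K # y # \<tau>')) (\<sigma>b @ (replicate m 1 @ 1 # K # \<tau>b'))"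
    by (rule std_sigma[OF S _ _ w]) auto
  hence "vr (\<sigma> @ [a+1] @ replicate (M-1) a @ [K, K-1 + hd \<tau>] @ tl \<tau>) (\<sigma>b @ replicate M 1 @ [K] @ tl \<tau>b)"
    unfolding m tt tb y_def by (simp add: rep_mid)
  thus ?thesis by (rule vr_valid)
qed

theorem lemma2p11:
  fixes \<sigma> \<tau> \<sigma>b \<tau>b :: "nat list" and M a k n :: nat and x :: "nat \<Rightarrow> 'a::comm_ring_1"
  assumes "standing_hyp \<sigma> \<tau> \<sigma>b \<tau>b" and "M \<ge> 1" and "a \<ge> 2" and "k \<ge> 1"
  shows "ov_schur n x (\<sigma> @ [k*a, k*a] @ replicate M a @ \<tau>) (\<sigma>b @ [(k-1)*a+1] @ replicate M 1 @ \<tau>b)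
       - ov_schur n x (\<sigma> @ [k*a+1, k*a-1] @ replicate M a @ \<tau>) (\<sigma>b @ [(k-1)*a+1] @ replicate M 1 @ \<tau>b)
       + (\<Sum>i=1..M.
            ov_schur n x (\<sigma> @ [a+1] @ replicate (i-1) a @ [k*a-1, k*a] @ replicate (M-i) a @ \<tau>)
                         (\<sigma>b @ replicate i 1 @ [(k-1)*a+1] @ replicate (M-i) 1 @ \<tau>b)
          - ov_schur n x (\<sigma> @ [a+1] @ replicate (i-1) a @ [k*a, k*a-1] @ replicate (M-i) a @ \<tau>)
                         (\<sigma>b @ replicate i 1 @ [(k-1)*a+1] @ replicate (M-i) 1 @ \<tau>b))
     = ov_schur n x (\<sigma> @ [k*a, k*a] @ replicate M a @ \<tau>) (\<sigma>b @ [k*a] @ replicate M 1 @ \<tau>b)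
       + ov_schur n x (\<sigma> @ [k*a+1, (k+1)*a-1] @ replicate (M-1) a @ \<tau>) (\<sigma>b @ [k*a] @ replicate (M-1) 1 @ \<tau>b)
       - ov_schur n x (\<sigma> @ [(k+1)*a, k*a] @ replicate (M-1) a @ \<tau>) (\<sigma>b @ [k*a] @ replicate (M-1) 1 @ \<tau>b)
       + (if \<tau> = [] then 0 else
            ov_schur n x (\<sigma> @ [a+1] @ replicate (M-1) a @ [k*a, k*a-1 + hd \<tau>] @ tl \<tau>)
                         (\<sigma>b @ replicate M 1 @ [k*a] @ tl \<tau>b))
       + (\<Sum>i=1..M-1.
            ov_schur n x (\<sigma> @ [a+1] @ replicate (i-1) a @ [k*a, (k+1)*a-1] @ replicate (M-1-i) a @ \<tau>)
                         (\<sigma>b @ replicate i 1 @ [k*a] @ replicate (M-i-1) 1 @ \<tau>b)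
          - ov_schur n x (\<sigma> @ [a+1] @ replicate (i-1) a @ [(k+1)*a-1, k*a] @ replicate (M-1-i) a @ \<tau>)
                         (\<sigma>b @ replicate i 1 @ [k*a] @ replicate (M-i-1) 1 @ \<tau>b))"
proof -
  have S: "standing_hyp \<sigma> \<tau> \<sigma>b \<tau>b" by (rule assms(1))
  have a1: "1 \<le> a" and a2: "2 \<le> a" using assms(3) by auto
  have ls: "length \<sigma>b = length \<sigma>" and gs: "\<sigma> \<noteq> [] \<Longrightarrow> last \<sigma>b \<le> 1"
    and lt: "length \<tau>b = length \<tau>"
    using S unfolding standing_hyp_def by auto
  have t1: "\<tau> \<noteq> [] \<Longrightarrow> hd \<tau>b = 1 \<and> 1 \<le> hd \<tau>"
  proof -
    assume t: "\<tau> \<noteq> []"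
    have "1 \<le> \<tau>!0" using S t unfolding standing_hyp_def by auto
    thus "hd \<tau>b = 1 \<and> 1 \<le> hd \<tau>" using S t by (simp add: standing_hyp_def hd_conv_nth)
  qed
  have t2: "2 \<le> length \<tau> \<Longrightarrow> \<tau>b!1 \<le> \<tau>!0"
  proof -
    assume "2 \<le> length \<tau>"
    hence "\<tau>b!1 \<le> min (\<tau>!1) (\<tau>!(1-1))" using S unfolding standing_hyp_def by auto
    thus "\<tau>b!1 \<le> \<tau>!0" by simp
  qed
  define c where "c = (k-1)*a"
  have ek: "k*a = a + c" "(k-1)*a = c" "(k+1)*a = a + a + c"
    using assms(4) unfolding c_def by (cases k; simp)+
  obtain m where Mm: "M = Suc m" using assms(2) by (cases M) auto
  have main: "LHSg n x \<sigma> \<sigma>b a c M \<tau> \<tau>b = RHSg n x \<sigma> \<sigma>b a c M \<tau> \<tau>b"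
    unfolding Mm by (rule G_main[OF ls gs a2 lt t1 t2])
  have oVL: "\<And>p q r m. r \<le> p \<Longrightarrow> r \<le> q \<Longrightarrow> 1 \<le> p \<Longrightarrow> 1 \<le> q \<Longrightarrow>
      ov_schur n x (\<sigma> @ [p, q] @ replicate m a @ \<tau>) (\<sigma>b @ [r] @ replicate m 1 @ \<tau>b)
    = G n x (\<sigma> @ [p, q] @ replicate m a @ \<tau>) (\<sigma>b @ [r] @ replicate m 1 @ \<tau>b)"
    using ov_schur_G VL[OF S a1] by blast
  have oVS: "\<And>p q r m m' i. r \<le> p \<Longrightarrow> r \<le> q \<Longrightarrow> 1 \<le> p \<Longrightarrow> 1 \<le> q \<Longrightarrow> 1 \<le> i \<Longrightarrow> m' = m \<Longrightarrow>
      ov_schur n x (\<sigma> @ [a+1] @ replicate (i-1) a @ [p, q] @ replicate m a @ \<tau>) (\<sigma>b @ replicate i 1 @ [r] @ replicate m' 1 @ \<tau>b)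
    = G n x (\<sigma> @ [a+1] @ replicate (i-1) a @ [p, q] @ replicate m a @ \<tau>) (\<sigma>b @ replicate i 1 @ [r] @ replicate m' 1 @ \<tau>b)"
    using ov_schur_G VS[OF S a1] by blast
  have oV4: "\<tau> \<noteq> [] \<Longrightarrow>
      ov_schur n x (\<sigma> @ [a+1] @ replicate (M-1) a @ [a+c, a+c-1 + hd \<tau>] @ tl \<tau>) (\<sigma>b @ replicate M 1 @ [a+c] @ tl \<tau>b)
    = G n x (\<sigma> @ [a+1] @ replicate (M-1) a @ [a+c, a+c-1 + hd \<tau>] @ tl \<tau>) (\<sigma>b @ replicate M 1 @ [a+c] @ tl \<tau>b)"
  proof -
    assume t: "\<tau> \<noteq> []"
    have v: "valid (\<sigma> @ [a+1] @ replicate (M-1) a @ [a+c, a+c-1 + hd \<tau>] @ tl \<tau>) (\<sigma>b @ replicate M 1 @ [a+c] @ tl \<tau>b)"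
      by (rule V4[OF S a1 t _ assms(2)]) (use a1 in simp)
    show ?thesis by (rule ov_schur_G[OF v])
  qed
  have L: "ov_schur n x (\<sigma> @ [a+c, a+c] @ replicate M a @ \<tau>) (\<sigma>b @ [c+1] @ replicate M 1 @ \<tau>b)
       - ov_schur n x (\<sigma> @ [a+c+1, a+c-1] @ replicate M a @ \<tau>) (\<sigma>b @ [c+1] @ replicate M 1 @ \<tau>b)
       + (\<Sum>i=1..M.
            ov_schur n x (\<sigma> @ [a+1] @ replicate (i-1) a @ [a+c-1, a+c] @ replicate (M-i) a @ \<tau>)
                         (\<sigma>b @ replicate i 1 @ [c+1] @ replicate (M-i) 1 @ \<tau>b)
          - ov_schur n x (\<sigma> @ [a+1] @ replicate (i-1) a @ [a+c, a+c-1] @ replicate (M-i) a @ \<tau>)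
                         (\<sigma>b @ replicate i 1 @ [c+1] @ replicate (M-i) 1 @ \<tau>b)) = LHSg n x \<sigma> \<sigma>b a c M \<tau> \<tau>b"
  proof -
    have s: "(\<Sum>i=1..M.
            ov_schur n x (\<sigma> @ [a+1] @ replicate (i-1) a @ [a+c-1, a+c] @ replicate (M-i) a @ \<tau>)
                         (\<sigma>b @ replicate i 1 @ [c+1] @ replicate (M-i) 1 @ \<tau>b)
          - ov_schur n x (\<sigma> @ [a+1] @ replicate (i-1) a @ [a+c, a+c-1] @ replicate (M-i) a @ \<tau>)
                         (\<sigma>b @ replicate i 1 @ [c+1] @ replicate (M-i) 1 @ \<tau>b))
        = (\<Sum>i=1..M. Lsum n x \<sigma> \<sigma>b a c M \<tau> \<tau>b i)"
    proof (rule sum.cong[OF refl])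
      fix i assume "i \<in> {1..M}"
      hence i: "1 \<le> i" by simp
      show "ov_schur n x (\<sigma> @ [a+1] @ replicate (i-1) a @ [a+c-1, a+c] @ replicate (M-i) a @ \<tau>)
                         (\<sigma>b @ replicate i 1 @ [c+1] @ replicate (M-i) 1 @ \<tau>b)
          - ov_schur n x (\<sigma> @ [a+1] @ replicate (i-1) a @ [a+c, a+c-1] @ replicate (M-i) a @ \<tau>)
                         (\<sigma>b @ replicate i 1 @ [c+1] @ replicate (M-i) 1 @ \<tau>b) = Lsum n x \<sigma> \<sigma>b a c M \<tau> \<tau>b i"
        unfolding Lsum_def using oVS[OF _ _ _ _ i refl] a2 by simp
    qed
    show ?thesis unfolding LHSg_def s using oVL a2 by simp
  qed
  have R: "ov_schur n x (\<sigma> @ [a+c, a+c] @ replicate M a @ \<tau>) (\<sigma>b @ [a+c] @ replicate M 1 @ \<tau>b)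
       + ov_schur n x (\<sigma> @ [a+c+1, a+a+c-1] @ replicate (M-1) a @ \<tau>) (\<sigma>b @ [a+c] @ replicate (M-1) 1 @ \<tau>b)
       - ov_schur n x (\<sigma> @ [a+a+c, a+c] @ replicate (M-1) a @ \<tau>) (\<sigma>b @ [a+c] @ replicate (M-1) 1 @ \<tau>b)
       + (if \<tau> = [] then 0 else
            ov_schur n x (\<sigma> @ [a+1] @ replicate (M-1) a @ [a+c, a+c-1 + hd \<tau>] @ tl \<tau>)
                         (\<sigma>b @ replicate M 1 @ [a+c] @ tl \<tau>b))
       + (\<Sum>i=1..M-1.
            ov_schur n x (\<sigma> @ [a+1] @ replicate (i-1) a @ [a+c, a+a+c-1] @ replicate (M-1-i) a @ \<tau>)
                         (\<sigma>b @ replicate i 1 @ [a+c] @ replicate (M-i-1) 1 @ \<tau>b)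
          - ov_schur n x (\<sigma> @ [a+1] @ replicate (i-1) a @ [a+a+c-1, a+c] @ replicate (M-1-i) a @ \<tau>)
                         (\<sigma>b @ replicate i 1 @ [a+c] @ replicate (M-i-1) 1 @ \<tau>b)) = RHSg n x \<sigma> \<sigma>b a c M \<tau> \<tau>b"
  proof -
    have s: "(\<Sum>i=1..M-1.
            ov_schur n x (\<sigma> @ [a+1] @ replicate (i-1) a @ [a+c, a+a+c-1] @ replicate (M-1-i) a @ \<tau>)
                         (\<sigma>b @ replicate i 1 @ [a+c] @ replicate (M-i-1) 1 @ \<tau>b)
          - ov_schur n x (\<sigma> @ [a+1] @ replicate (i-1) a @ [a+a+c-1, a+c] @ replicate (M-1-i) a @ \<tau>)
                         (\<sigma>b @ replicate i 1 @ [a+c] @ replicate (M-i-1) 1 @ \<tau>b))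
        = (\<Sum>i=1..M-1. Rsum n x \<sigma> \<sigma>b a c M \<tau> \<tau>b i)"
    proof (rule sum.cong[OF refl])
      fix i assume "i \<in> {1..M-1}"
      hence i: "1 \<le> i" by simp
      have mm: "M - i - 1 = M - 1 - i" by simp
      show "ov_schur n x (\<sigma> @ [a+1] @ replicate (i-1) a @ [a+c, a+a+c-1] @ replicate (M-1-i) a @ \<tau>)
                         (\<sigma>b @ replicate i 1 @ [a+c] @ replicate (M-i-1) 1 @ \<tau>b)
          - ov_schur n x (\<sigma> @ [a+1] @ replicate (i-1) a @ [a+a+c-1, a+c] @ replicate (M-1-i) a @ \<tau>)
                         (\<sigma>b @ replicate i 1 @ [a+c] @ replicate (M-i-1) 1 @ \<tau>b) = Rsum n x \<sigma> \<sigma>b a c M \<tau> \<tau>b i"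
        unfolding Rsum_def using oVS[OF _ _ _ _ i mm] a2 by simp
    qed
    have r4: "(if \<tau> = [] then 0 else
            ov_schur n x (\<sigma> @ [a+1] @ replicate (M-1) a @ [a+c, a+c-1 + hd \<tau>] @ tl \<tau>)
                         (\<sigma>b @ replicate M 1 @ [a+c] @ tl \<tau>b)) = R4 n x \<sigma> \<sigma>b a c M \<tau> \<tau>b"
      unfolding R4_def using oV4 by simp
    show ?thesis unfolding RHSg_def s r4 using oVL a2 by simp
  qed
  show ?thesis unfolding ek L R by (rule main)
qed

end
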